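(* Let $u\neq v$ be vertices of $T$ such that $u$ is either an ancestor or a descendant of $v$. Let $u'$ be the vertex reached after executing the routing steps of Case 1 (if $u$ is an ancestor of $v$) or of Case 2 (if $u$ is a descendant of $v$) when routing from $u$ to $v$. Then: (1) If $S_u$ is a proper prefix of $S_v$, then $|S_{u'}|>|S_u|$; moreover, either $S_{u'}=S_v$ or $S_{u'}$ is a proper prefix of $S_v$. (2) If $S_v$ is a proper prefix of $S_u$, then $|S_{u'}|<|S_u|$; moreover, either $S_{u'}=S_v$ or $S_v$ is a proper prefix of $S_{u'}$. (3) Suppose the longest common prefix $S$ of $S_u$ and $S_v$ has length $m<\min\{|S_u|,|S_v|\}$. Then $|S_{u'}|<|S_u|$; moreover, either $S_{u'}=S$ or $S$ is a proper prefix of $S_{u'}$.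
   Context: Let $T$ be a rooted tree on $n$ vertices with positive edge weights. Ancestor/descendant refer to $T$, and a vertex counts as its own ancestor and descendant; "deepest"/"highest" refer to depth in $T$. $T_v$ is the subtree of $T$ rooted at $v$. For every non-leaf vertex $v$ fix a child $c_1(v)$ with $|T_{c_1(v)}|$ maximal; edges $(v,c_1(v))$ are leftmost. A subtree $R$ of $T$ is rooted at its vertex closest to the root, $rt(R)$, and inherits the leftmost labelling; $R_v$ is the subtree of $R$ rooted at $v$. $P_R(v)$ is the longest downward path from $v$ in $R$ using only leftmost edges, with last vertex $l(v)$; $l(R):=l(rt(R))$. A vertex $v$ of $R$ is $d$-balanced if $|R_{c_1(v)}|\le |R|-d$ (with $|R_{c_1(v)}|=0$ if $c_1(v)$ is undefined or not in $R$); $b_d(v)$ is the first $d$-balanced vertex on $P_R(v)$, or NULL. $CV(R,d)=\emptyset$ if $b_d(rt(R))$ is NULL, else $\{b\}\cup\bigcup_w CV(R_w,d)$ with $b=b_d(rt(R))$ and $w$ ranging over children of $b$ in $R$. Fix an integer $k\ge4$; for a subtree $R$ with $m$ vertices, $C_R=V(R)$ if $k\ge m/2-1$, else $C_R=CV(R,m/k)\cup\{l(R),rt(R)\}$. Canonical subtrees: $T$ is canonical; if $R$ is canonical, each component of $R$ minus $C_R$ is canonical. Each vertex $v$ lies in $C_R$ for exactly one canonical $R$, denoted $T^v$. Canonical sequences: $T$ is assigned the empty integer sequence; if a canonical subtree $R$ has been assigned the sequence $S$ and the components of $R$ minus $C_R$ are $R_1,\dots,R_p$ (in some fixed order), then $R_j$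 is assigned $S$ followed by $j$. $S_v$ denotes the sequence assigned to $T^v$. Routing steps: Case 1 ($u$ an ancestor of $v$): let $X$ be the vertices of $C_{T^u}$ that are ancestors of $v$ and $x$ the deepest; move to $x$, then to the child of $x$ that is an ancestor of $v$. Case 2 ($u$ a descendant of $v$): let $X$ be the vertices of $C_{T^u}$ that are descendants of $v$ and ancestors of $u$ and $x$ the highest; move to $x$, then to the parent of $x$. (Moving to the current vertex means staying.) *)

theory Defs
  imports Complex_Main "HOL-Library.Sublist"
begin

text \<open>A rooted tree is given by a finite vertex set V, a root r and a parent map par,
  with the convention par r = r.  Edge weights play no role in the routing steps and
  are therefore omitted.\<close>

definition anc :: "('a \<Rightarrow> 'a) \<Rightarrow> 'a \<Rightarrow> 'a \<Rightarrow> bool" where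
  "anc par u v \<longleftrightarrow> (\<exists>n. (par ^^ n) v = u)"

definition is_rooted_tree :: "'a set \<Rightarrow> 'a \<Rightarrow> ('a \<Rightarrow> 'a) \<Rightarrow> bool" where
  "is_rooted_tree V r par \<longleftrightarrow> finite V \<and> r \<in> V \<and> par r = r \<and>
     (\<forall>v\<in>V. par v \<in> V \<and> anc par r v)"

definition child :: "'a \<Rightarrow> ('a \<Rightarrow> 'a) \<Rightarrow> 'a \<Rightarrow> 'a \<Rightarrow> bool" where
  "child r par w x \<longleftrightarrow> w \<noteq> r \<and> par w = x"

definition Tsub :: "'a set \<Rightarrow> ('a \<Rightarrow> 'a) \<Rightarrow> 'a \<Rightarrow> 'a set" where
  "Tsub V par v = {w \<in> V. anc par v w}"

text \<open>c1 is a fixed choice of a child with maximal subtree; its value at leaves is irrelevant.\<close>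
definition valid_c1 :: "'a set \<Rightarrow> 'a \<Rightarrow> ('a \<Rightarrow> 'a) \<Rightarrow> ('a \<Rightarrow> 'a) \<Rightarrow> bool" where
  "valid_c1 V r par c1 \<longleftrightarrow> (\<forall>v\<in>V. (\<exists>w\<in>V. child r par w v) \<longrightarrow>
      (c1 v \<in> V \<and> child r par (c1 v) v \<and>
       (\<forall>w\<in>V. child r par w v \<longrightarrow> card (Tsub V par w) \<le> card (Tsub V par (c1 v)))))"

definition on_path :: "('a \<Rightarrow> 'a) \<Rightarrow> 'a \<Rightarrow> 'a \<Rightarrow> 'a \<Rightarrow> bool" where
  "on_path par x y z \<longleftrightarrow> (anc par z x \<or> anc par z y) \<and>
     (\<forall>w. anc par w x \<and> anc par w y \<longrightarrow> anc par w z)"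

text \<open>Subtrees of T = nonempty vertex sets inducing connected subgraphs.\<close>
definition is_subtree :: "'a set \<Rightarrow> ('a \<Rightarrow> 'a) \<Rightarrow> 'a set \<Rightarrow> bool" where
  "is_subtree V par R \<longleftrightarrow> R \<subseteq> V \<and> R \<noteq> {} \<and>
     (\<forall>x\<in>R. \<forall>y\<in>R. \<forall>z. on_path par x y z \<longrightarrow> z \<in> R)"

definition rt :: "('a \<Rightarrow> 'a) \<Rightarrow> 'a set \<Rightarrow> 'a" where
  "rt par R = (THE x. x \<in> R \<and> (\<forall>y\<in>R. anc par x y))"

definition sub :: "('a \<Rightarrow> 'a) \<Rightarrow> 'a set \<Rightarrow> 'a \<Rightarrow> 'a set" where
  "sub par R v = {w \<in> R. anc par v w}"

definition leftmost :: "'a \<Rightarrow> ('a \<Rightarrow> 'a) \<Rightarrow> ('a \<Rightarrow> 'a) \<Rightarrow> 'a \<Rightarrow> bool" where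
  "leftmost r par c1 w \<longleftrightarrow> w \<noteq> r \<and> c1 (par w) = w"

definition onP :: "'a \<Rightarrow> ('a \<Rightarrow> 'a) \<Rightarrow> ('a \<Rightarrow> 'a) \<Rightarrow> 'a set \<Rightarrow> 'a \<Rightarrow> 'a \<Rightarrow> bool" where
  "onP r par c1 R v w \<longleftrightarrow> w \<in> R \<and> anc par v w \<and>
     (\<forall>x. anc par v x \<and> anc par x w \<and> x \<noteq> v \<longrightarrow> leftmost r par c1 x)"

definition lend :: "'a \<Rightarrow> ('a \<Rightarrow> 'a) \<Rightarrow> ('a \<Rightarrow> 'a) \<Rightarrow> 'a set \<Rightarrow> 'a \<Rightarrow> 'a" where
  "lend r par c1 R v = (THE w. onP r par c1 R v w \<and> (\<forall>w'. onP r par c1 R v w' \<longrightarrow> anc par w' w))"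

definition c1size :: "'a \<Rightarrow> ('a \<Rightarrow> 'a) \<Rightarrow> ('a \<Rightarrow> 'a) \<Rightarrow> 'a set \<Rightarrow> 'a \<Rightarrow> nat" where
  "c1size r par c1 R v = (if c1 v \<in> R \<and> child r par (c1 v) v then card (sub par R (c1 v)) else 0)"

definition balanced :: "'a \<Rightarrow> ('a \<Rightarrow> 'a) \<Rightarrow> ('a \<Rightarrow> 'a) \<Rightarrow> 'a set \<Rightarrow> real \<Rightarrow> 'a \<Rightarrow> bool" where
  "balanced r par c1 R d v \<longleftrightarrow> real (c1size r par c1 R v) \<le> real (card R) - d"

definition bd :: "'a \<Rightarrow> ('a \<Rightarrow> 'a) \<Rightarrow> ('a \<Rightarrow> 'a) \<Rightarrow> 'a set \<Rightarrow> real \<Rightarrow> 'a \<Rightarrow> 'a option" where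
  "bd r par c1 R d v =
    (if \<exists>w. onP r par c1 R v w \<and> balanced r par c1 R d w
     then Some (THE w. onP r par c1 R v w \<and> balanced r par c1 R d w \<and>
                  (\<forall>w'. onP r par c1 R v w' \<and> balanced r par c1 R d w' \<longrightarrow> anc par w w'))
     else None)"

inductive inCV :: "'a \<Rightarrow> ('a \<Rightarrow> 'a) \<Rightarrow> ('a \<Rightarrow> 'a) \<Rightarrow> 'a set \<Rightarrow> real \<Rightarrow> 'a \<Rightarrow> bool"
  for r par c1 where
  base: "bd r par c1 R d (rt par R) = Some b \<Longrightarrow> inCV r par c1 R d b"
| step: "bd r par c1 R d (rt par R) = Some b \<Longrightarrow> w \<in> R \<Longrightarrow> child r par w b \<Longrightarrow>
         inCV r par c1 (sub par R w) d x \<Longrightarrow> inCV r par c1 R d x"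

definition CV :: "'a \<Rightarrow> ('a \<Rightarrow> 'a) \<Rightarrow> ('a \<Rightarrow> 'a) \<Rightarrow> 'a set \<Rightarrow> real \<Rightarrow> 'a set" where
  "CV r par c1 R d = {x. inCV r par c1 R d x}"

definition CR :: "'a \<Rightarrow> ('a \<Rightarrow> 'a) \<Rightarrow> ('a \<Rightarrow> 'a) \<Rightarrow> nat \<Rightarrow> 'a set \<Rightarrow> 'a set" where
  "CR r par c1 k R =
    (if real k \<ge> real (card R) / 2 - 1 then R
     else CV r par c1 R (real (card R) / real k) \<union> {lend r par c1 R (rt par R), rt par R})"

definition components :: "'a set \<Rightarrow> ('a \<Rightarrow> 'a) \<Rightarrow> 'a set \<Rightarrow> 'a set set" where
  "components V par S = {Q. Q \<subseteq> S \<and> is_subtree V par Q \<and>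
      (\<forall>Q'. Q \<subseteq> Q' \<and> Q' \<subseteq> S \<and> is_subtree V par Q' \<longrightarrow> Q' = Q)}"

inductive canonical :: "'a set \<Rightarrow> 'a \<Rightarrow> ('a \<Rightarrow> 'a) \<Rightarrow> ('a \<Rightarrow> 'a) \<Rightarrow> nat \<Rightarrow> 'a set \<Rightarrow> bool"
  for V r par c1 k where
  top: "canonical V r par c1 k V"
| comp: "canonical V r par c1 k R \<Longrightarrow> Q \<in> components V par (R - CR r par c1 k R) \<Longrightarrow>
         canonical V r par c1 k Q"

definition Tv :: "'a set \<Rightarrow> 'a \<Rightarrow> ('a \<Rightarrow> 'a) \<Rightarrow> ('a \<Rightarrow> 'a) \<Rightarrow> nat \<Rightarrow> 'a \<Rightarrow> 'a set" where
  "Tv V r par c1 k v = (THE R. canonical V r par c1 k R \<and> v \<in> CR r par c1 k R)"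

text \<open>A canonical-sequence assignment (components numbered 1..p in an arbitrary fixed order).\<close>
definition valid_seq :: "'a set \<Rightarrow> 'a \<Rightarrow> ('a \<Rightarrow> 'a) \<Rightarrow> ('a \<Rightarrow> 'a) \<Rightarrow> nat \<Rightarrow> ('a set \<Rightarrow> nat list) \<Rightarrow> bool" where
  "valid_seq V r par c1 k seq \<longleftrightarrow> seq V = [] \<and>
    (\<forall>R. canonical V r par c1 k R \<longrightarrow>
      (\<exists>f. bij_betw f (components V par (R - CR r par c1 k R))
                     {1..card (components V par (R - CR r par c1 k R))} \<and>
           (\<forall>Q\<in>components V par (R - CR r par c1 k R). seq Q = seq R @ [f Q])))"

definition Sv :: "'a set \<Rightarrow> 'a \<Rightarrow> ('a \<Rightarrow> 'a) \<Rightarrow> ('a \<Rightarrow> 'a) \<Rightarrow> nat \<Rightarrow> ('a set \<Rightarrow> nat list) \<Rightarrow> 'a \<Rightarrow> nat list" where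
  "Sv V r par c1 k seq v = seq (Tv V r par c1 k v)"

definition route :: "'a set \<Rightarrow> 'a \<Rightarrow> ('a \<Rightarrow> 'a) \<Rightarrow> ('a \<Rightarrow> 'a) \<Rightarrow> nat \<Rightarrow> 'a \<Rightarrow> 'a \<Rightarrow> 'a" where
  "route V r par c1 k u v =
    (let C = CR r par c1 k (Tv V r par c1 k u) in
     if anc par u v then
       (let x = (THE x. x \<in> C \<and> anc par x v \<and> (\<forall>y. y \<in> C \<and> anc par y v \<longrightarrow> anc par y x))
        in if x = v then x else (THE w. child r par w x \<and> anc par w v))
     else
       (let x = (THE x. x \<in> C \<and> anc par v x \<and> anc par x u \<and>
                   (\<forall>y. y \<in> C \<and> anc par v y \<and> anc par y u \<longrightarrow> anc par x y))
        in if x = v then x else par x))"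

end

theory Submission imports Defs begin

lemma fp: "(f^^a) ((f^^b) x) = (f^^(a+b)) x"
  by (simp add: funpow_add)

lemma anc_refl[simp]: "anc par v v"
  unfolding anc_def by (rule exI[of _ 0]) simp

lemma anc_trans: "anc par a b \<Longrightarrow> anc par b c \<Longrightarrow> anc par a c"
  unfolding anc_def by (metis fp)

lemma anc_par[simp]: "anc par (par v) v"
  unfolding anc_def by (rule exI[of _ 1]) simp

lemma anc_parI: "anc par a (par v) \<Longrightarrow> anc par a v"
  using anc_trans anc_par by metis

lemma anc_lin: "anc par a w \<Longrightarrow> anc par b w \<Longrightarrow> anc par a b \<or> anc par b a"
  unfolding anc_def
proof (elim exE)
  fix i j assume a: "(par ^^ i) w = a" and b: "(par ^^ j) w = b"
  show "(\<exists>n. (par ^^ n) b = a) \<or> (\<exists>n. (par ^^ n) a = b)"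
  proof (cases "i \<le> j")
    case True
    then have "(par ^^ (j-i)) a = b" using a b fp[where f=par and a="j-i" and b=i and x=w] by simp
    then show ?thesis by blast
  next
    case False
    then have "(par ^^ (i-j)) b = a" using a b fp[where f=par and a="i-j" and b=j and x=w] by simp
    then show ?thesis by blast
  qed
qed

lemma anc_strict_par: "anc par a w \<Longrightarrow> a \<noteq> w \<Longrightarrow> anc par a (par w)"
  unfolding anc_def
proof (elim exE)
  fix n assume a: "(par ^^ n) w = a" and ne: "a \<noteq> w"
  then obtain m where "n = Suc m" by (cases n) auto
  then have "(par ^^ m) (par w) = a" using a by (simp add: funpow_swap1)
  then show "\<exists>n. (par ^^ n) (par w) = a" by blast
qed

definition Good :: "('a \<Rightarrow> 'a) \<Rightarrow> 'a \<Rightarrow> ('a \<Rightarrow> 'a) \<Rightarrow> 'a \<Rightarrow> 'a \<Rightarrow> bool" where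
  "Good par r c1 y a \<longleftrightarrow> (\<forall>s. anc par s y \<longrightarrow> anc par a s \<longrightarrow> s \<noteq> a \<longrightarrow> par s \<noteq> a \<longrightarrow> leftmost r par c1 s)"

lemma lm_comp_aux:
  assumes "(par ^^ n1) w1 = v" "\<forall>j<n1. (par ^^ j) w1 \<noteq> v"
    "(par ^^ n2) w2 = v" "\<forall>j<n2. (par ^^ j) w2 \<noteq> v" "n1 \<le> n2"
    "\<forall>x. anc par v x \<and> anc par x w1 \<and> x \<noteq> v \<longrightarrow> leftmost r par c1 x"
    "\<forall>x. anc par v x \<and> anc par x w2 \<and> x \<noteq> v \<longrightarrow> leftmost r par c1 x"
  shows "anc par w1 w2"
proof -
  have "\<forall>i\<le>n1. (par ^^ (n1 - i)) w1 = (par ^^ (n1 - i)) ((par ^^ (n2-n1)) w2)"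
  proof (intro allI impI)
    fix i assume "i \<le> n1"
    then show "(par ^^ (n1 - i)) w1 = (par ^^ (n1 - i)) ((par ^^ (n2-n1)) w2)"
    proof (induction i)
      case 0
      then show ?case using assms(1,3,5) fp[where f=par and a=n1 and b="n2-n1" and x=w2] by simp
    next
      case (Suc i)
      define j where "j = n1 - Suc i"
      have nj: "n1 - i = Suc j" using Suc.prems j_def by simp
      define s1 where "s1 = (par ^^ j) w1"
      define s2 where "s2 = (par ^^ (j + (n2 - n1))) w2"
      have e: "par s1 = par s2" using Suc nj unfolding s1_def s2_def
        by (simp add: fp[symmetric] del: funpow.simps) (metis comp_apply funpow.simps(2) funpow_swap1 fp)
      have l1: "leftmost r par c1 s1"
      proof -
        have "n1 - j + j = n1" using j_def Suc.prems by simp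
        then have "anc par v s1" unfolding anc_def s1_def using assms(1) fp[where f=par and a="n1 - j" and b=j and x=w1]
          by metis
        moreover have "anc par s1 w1" unfolding anc_def s1_def by blast
        moreover have "s1 \<noteq> v" unfolding s1_def using assms(2) j_def Suc.prems by simp
        ultimately show ?thesis using assms(6) by blast
      qed
      have l2: "leftmost r par c1 s2"
      proof -
        have "n1 - j + (j + (n2 - n1)) = n2" using j_def Suc.prems assms(5) by simp
        then have "anc par v s2" unfolding anc_def s2_def using assms(3) fp[where f=par and a="n1 - j" and b="j + (n2 - n1)" and x=w2]
          by metis
        moreover have "anc par s2 w2" unfolding anc_def s2_def by blast
        moreover have "s2 \<noteq> v" unfolding s2_def using assms(4,5) j_def Suc.prems by simp
        ultimately show ?thesis using assms(7) by blast
      qed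
      have "s1 = s2" using l1 l2 e unfolding leftmost_def by metis
      then show ?case unfolding s1_def s2_def j_def using fp[where f=par and a=j and b="n2-n1" and x=w2]
        by (simp add: j_def)
    qed
  qed
  then have "w1 = (par ^^ (n2-n1)) w2" by (metis diff_self_eq_0 funpow_0 order_refl)
  then show ?thesis unfolding anc_def by metis
qed

lemma least_anc:
  assumes "anc par v w"
  obtains n where "(par ^^ n) w = v" "\<forall>j<n. (par ^^ j) w \<noteq> v"
proof -
  from assms obtain n where "(par ^^ n) w = v" unfolding anc_def by blast
  then have "\<exists>n. (par ^^ n) w = v" by blast
  from exists_least_iff[THEN iffD1, OF this] that show ?thesis by blast
qed

lemma lm_comp:
  assumes "onP r par c1 R v w1" "onP r par c1 R v w2"
  shows "anc par w1 w2 \<or> anc par w2 w1"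
proof -
  from assms have a1: "anc par v w1" and a2: "anc par v w2" unfolding onP_def by auto
  obtain n1 where n1: "(par ^^ n1) w1 = v" "\<forall>j<n1. (par ^^ j) w1 \<noteq> v" using least_anc[OF a1] by blast
  obtain n2 where n2: "(par ^^ n2) w2 = v" "\<forall>j<n2. (par ^^ j) w2 \<noteq> v" using least_anc[OF a2] by blast
  have c1: "\<forall>x. anc par v x \<and> anc par x w1 \<and> x \<noteq> v \<longrightarrow> leftmost r par c1 x"
   and c2: "\<forall>x. anc par v x \<and> anc par x w2 \<and> x \<noteq> v \<longrightarrow> leftmost r par c1 x"
    using assms unfolding onP_def by auto
  show ?thesis
  proof (cases "n1 \<le> n2")
    case True then show ?thesis using lm_comp_aux[OF n1 n2 True c1 c2] by blast
  next
    case False then show ?thesis using lm_comp_aux[OF n2 n1 _ c2 c1] by simp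
  qed
qed


locale rtree =
  fixes V :: "'a set" and r :: 'a and par :: "'a \<Rightarrow> 'a"
  assumes tree: "is_rooted_tree V r par"
begin

lemma finV: "finite V" and rV: "r \<in> V" and parr: "par r = r"
  and parV: "v \<in> V \<Longrightarrow> par v \<in> V" and ancr: "v \<in> V \<Longrightarrow> anc par r v"
  using tree unfolding is_rooted_tree_def by auto

lemma funpow_r: "(par ^^ n) r = r"
  by (induction n) (auto simp: parr)

lemma funpow_V: "v \<in> V \<Longrightarrow> (par ^^ n) v \<in> V"
  by (induction n) (auto simp: parV)

lemma anc_V: "anc par u v \<Longrightarrow> v \<in> V \<Longrightarrow> u \<in> V"
  unfolding anc_def using funpow_V by blast

lemma anc_antisym: assumes "anc par u v" "anc par v u" "v \<in> V" shows "u = v"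
proof -
  obtain n where n: "(par ^^ n) v = u" using assms(1) unfolding anc_def by blast
  obtain m where m: "(par ^^ m) u = v" using assms(2) unfolding anc_def by blast
  obtain k where k: "(par ^^ k) v = r" using ancr[OF assms(3)] unfolding anc_def by blast
  have cyc: "(par ^^ (m+n)) v = v" using n m fp[where f=par and a=m and b=n and x=v] by simp
  show ?thesis
  proof (cases "m+n = 0")
    case True then show ?thesis using n by simp
  next
    case False
    have all: "(par ^^ ((m+n)*j)) v = v" for j
    proof (induction j)
      case 0 then show ?case by simp
    next
      case (Suc j)
      have "(par ^^ ((m+n)*Suc j)) v = (par ^^ (m+n)) ((par ^^ ((m+n)*j)) v)"
        using fp[where f=par and a="m+n" and b="(m+n)*j" and x=v] by (simp add: add.commute)
      then show ?case using Suc cyc by simp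
    qed
    have "1*k \<le> (m+n)*k" using False by (intro mult_le_mono1) linarith
    then have ge: "(m+n)*k \<ge> k" by simp
    have "(par ^^ ((m+n)*k)) v = (par ^^ ((m+n)*k - k)) ((par ^^ k) v)"
      using fp[where f=par and a="(m+n)*k - k" and b=k and x=v] ge by simp
    then have "v = r" using all[of k] k funpow_r by simp
    then show ?thesis using n funpow_r by simp
  qed
qed

lemma par_fix: "v \<in> V \<Longrightarrow> par v = v \<Longrightarrow> v = r"
proof -
  assume v: "v \<in> V" "par v = v"
  have "(par ^^ n) v = v" for n by (induction n) (auto simp: v)
  then show "v = r" using ancr[OF v(1)] unfolding anc_def by auto
qed

lemma anc_par_eq: "w \<in> V \<Longrightarrow> anc par w (par w) \<Longrightarrow> w = r"
  using anc_antisym[of w "par w"] par_fix parV by (metis anc_par)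

lemma chain_max:
  assumes "finite S" "S \<noteq> {}" "\<forall>a\<in>S. \<forall>b\<in>S. anc par a b \<or> anc par b a"
  shows "\<exists>x\<in>S. \<forall>y\<in>S. anc par y x"
  using assms
proof (induction S rule: finite_ne_induct)
  case (singleton x) then show ?case by simp
next
  case (insert a S)
  then obtain x where x: "x \<in> S" "\<forall>y\<in>S. anc par y x" by auto
  show ?case
  proof (cases "anc par x a")
    case True
    have "\<forall>y\<in>insert a S. anc par y a" using True x anc_trans[of par _ x a] by auto
    then show ?thesis by blast
  next
    case False then have "anc par a x" using insert.prems x by blast
    then show ?thesis using x by auto
  qed
qed

lemma chain_min:
  assumes "finite S" "S \<noteq> {}" "\<forall>a\<in>S. \<forall>b\<in>S. anc par a b \<or> anc par b a"
  shows "\<exists>x\<in>S. \<forall>y\<in>S. anc par x y"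
  using assms
proof (induction S rule: finite_ne_induct)
  case (singleton x) then show ?case by simp
next
  case (insert a S)
  then obtain x where x: "x \<in> S" "\<forall>y\<in>S. anc par x y" by auto
  show ?case
  proof (cases "anc par a x")
    case True
    have "\<forall>y\<in>insert a S. anc par a y" using True x anc_trans[of par a x] by auto
    then show ?thesis by blast
  next
    case False then have "anc par x a" using insert.prems x by blast
    then show ?thesis using x by auto
  qed
qed

lemma child_toward:
  assumes "anc par x v" "x \<noteq> v" "v \<in> V"
  shows "\<exists>!w. child r par w x \<and> anc par w v"
proof -
  obtain n where n: "(par ^^ n) v = x" "\<forall>j<n. (par ^^ j) v \<noteq> x" using least_anc[OF assms(1)] by blast
  then obtain m where m: "n = Suc m" using assms(2) by (cases n) auto
  define w where "w = (par ^^ m) v"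
  have pw: "par w = x" using n m unfolding w_def by simp
  have wx: "w \<noteq> x" using n m unfolding w_def by simp
  have wr: "w \<noteq> r" using pw wx parr by auto
  have aw: "anc par w v" unfolding w_def anc_def by blast
  show ?thesis
  proof (rule ex1I[of _ w])
    show "child r par w x \<and> anc par w v" using wr pw aw unfolding child_def by simp
  next
    fix w' assume w': "child r par w' x \<and> anc par w' v"
    then have pw': "par w' = x" "w' \<noteq> r" unfolding child_def by auto
    have wV: "w \<in> V" "w' \<in> V" using aw w' assms(3) anc_V by auto
    from anc_lin[of par w' v w] w' aw consider "anc par w' w" | "anc par w w'" by blast
    then show "w' = w"
    proof cases
      case 1
      show ?thesis
      proof (rule ccontr)
        assume "w' \<noteq> w"
        then have "anc par w' x" using anc_strict_par[OF 1] pw by simp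
        then have "anc par w' (par w')" using pw' by simp
        then show False using anc_par_eq wV pw' by blast
      qed
    next
      case 2
      show ?thesis
      proof (rule ccontr)
        assume "w' \<noteq> w"
        then have "anc par w x" using anc_strict_par[OF 2] pw' by simp
        then have "anc par w (par w)" using pw by simp
        then show False using anc_par_eq wV wr by blast
      qed
    qed
  qed
qed

lemma between:
  assumes "is_subtree V par R" "a \<in> R" "b \<in> R" "anc par a s" "anc par s b"
  shows "s \<in> R"
proof -
  have cl: "\<forall>x\<in>R. \<forall>y\<in>R. \<forall>z. on_path par x y z \<longrightarrow> z \<in> R"
    using assms(1) unfolding is_subtree_def by blast
  have RV: "R \<subseteq> V" using assms(1) unfolding is_subtree_def by blast
  have aV: "a \<in> V" using RV assms(2) by blast
  have "on_path par a b s"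
    unfolding on_path_def
  proof (intro conjI allI impI)
    show "anc par s a \<or> anc par s b" using assms(5) by simp
  next
    fix w assume w: "anc par w a \<and> anc par w b"
    have "anc par w s \<or> anc par s w" using anc_lin[of par w b s] w assms(5) by simp
    then show "anc par w s"
    proof
      assume "anc par w s" then show ?thesis .
    next
      assume "anc par s w"
      then have "anc par s a" using w anc_trans[of par s w a] by simp
      then have "s = a" using anc_antisym[of s a] assms(4) aV by simp
      then show ?thesis using w by simp
    qed
  qed
  then show ?thesis using cl assms(2,3) by blast
qed

definition seg where "seg a b = {s. anc par a s \<and> anc par s b}"

lemma seg_subtree:
  assumes "anc par q z" "z \<in> V"
  shows "is_subtree V par (seg q z)"
  unfolding is_subtree_def seg_def
proof (intro conjI ballI allI impI)
  show "{s. anc par q s \<and> anc par s z} \<subseteq> V" using anc_V assms by blast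
  show "{s. anc par q s \<and> anc par s z} \<noteq> {}" using assms by auto
next
  fix x y s assume x: "x \<in> {s. anc par q s \<and> anc par s z}" and y: "y \<in> {s. anc par q s \<and> anc par s z}"
    and s: "on_path par x y s"
  have "anc par s x \<or> anc par s y" using s unfolding on_path_def by blast
  then have "anc par s z" using x y anc_trans[of par s x z] anc_trans[of par s y z] by blast
  moreover have "anc par q s" using s x y unfolding on_path_def by blast
  ultimately show "s \<in> {s. anc par q s \<and> anc par s z}" by simp
qed

lemma seg_adj: "b \<in> V \<Longrightarrow> s \<in> seg (par b) b \<Longrightarrow> s = b \<or> s = par b"
  unfolding seg_def using anc_strict_par[of par s b] anc_antisym[of s "par b"] parV by blast

lemma on_path_sym: "on_path par x y z \<longleftrightarrow> on_path par y x z"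
  unfolding on_path_def by blast

lemma on_path_split1:
  assumes "on_path par x y z" "anc par z x"
  shows "on_path par x c z \<or> on_path par c y z"
proof (cases "\<forall>w. anc par w x \<and> anc par w c \<longrightarrow> anc par w z")
  case True then have "on_path par x c z" using assms(2) unfolding on_path_def by simp
  then show ?thesis by simp
next
  case False
  then obtain w1 where w1: "anc par w1 x" "anc par w1 c" "\<not> anc par w1 z" by blast
  have "anc par w1 z \<or> anc par z w1" using anc_lin[OF w1(1) assms(2)] by simp
  then have "anc par z w1" using w1(3) by simp
  then have zc: "anc par z c" using w1(2) anc_trans[of par z w1 c] by simp
  have cy: "\<forall>w. anc par w x \<and> anc par w y \<longrightarrow> anc par w z" using assms(1) unfolding on_path_def by simp
  have "on_path par c y z"
    unfolding on_path_def
  proof (intro conjI allI impI)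
    show "anc par z c \<or> anc par z y" using zc by simp
  next
    fix w assume w: "anc par w c \<and> anc par w y"
    have "anc par w w1 \<or> anc par w1 w" using anc_lin[of par w c w1] w w1(2) by simp
    then show "anc par w z"
    proof
      assume "anc par w w1" then have "anc par w x" using w1(1) anc_trans[of par w w1 x] by simp
      then show ?thesis using w cy by simp
    next
      assume "anc par w1 w" then have "anc par w1 y" using w anc_trans[of par w1 w y] by simp
      then have "anc par w1 z" using w1(1) cy by simp
      then show ?thesis using w1(3) by simp
    qed
  qed
  then show ?thesis by simp
qed

lemma on_path_split:
  assumes "on_path par x y z"
  shows "on_path par x c z \<or> on_path par c y z"
proof -
  have "anc par z x \<or> anc par z y" using assms unfolding on_path_def by blast
  then show ?thesis
  proof
    assume "anc par z x" then show ?thesis using on_path_split1 assms by blast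
  next
    assume "anc par z y"
    then have "on_path par y c z \<or> on_path par c x z" using on_path_split1[of y x z c] assms on_path_sym by blast
    then show ?thesis using on_path_sym by blast
  qed
qed

lemma subtree_union:
  assumes "is_subtree V par Q" "is_subtree V par W" "c \<in> Q" "c \<in> W"
  shows "is_subtree V par (Q \<union> W)"
  unfolding is_subtree_def
proof (intro conjI ballI allI impI)
  show "Q \<union> W \<subseteq> V" "Q \<union> W \<noteq> {}" using assms unfolding is_subtree_def by auto
next
  fix x y z assume x: "x \<in> Q \<union> W" and y: "y \<in> Q \<union> W" and z: "on_path par x y z"
  have cQ: "\<And>x y z. x \<in> Q \<Longrightarrow> y \<in> Q \<Longrightarrow> on_path par x y z \<Longrightarrow> z \<in> Q"
    using assms(1) unfolding is_subtree_def by blast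
  have cW: "\<And>x y z. x \<in> W \<Longrightarrow> y \<in> W \<Longrightarrow> on_path par x y z \<Longrightarrow> z \<in> W"
    using assms(2) unfolding is_subtree_def by blast
  have mix: "\<And>x y z. x \<in> Q \<Longrightarrow> y \<in> W \<Longrightarrow> on_path par x y z \<Longrightarrow> z \<in> Q \<union> W"
  proof -
    fix x y z assume "x \<in> Q" "y \<in> W" "on_path par x y z"
    then show "z \<in> Q \<union> W" using on_path_split[of x y z c] cQ cW assms(3,4) by blast
  qed
  show "z \<in> Q \<union> W" using x y z mix cQ cW on_path_sym by blast
qed

lemma singleton_subtree: "v \<in> V \<Longrightarrow> is_subtree V par {v}"
  unfolding is_subtree_def on_path_def using anc_antisym by auto

lemma comp_sub: "Q \<in> components V par S \<Longrightarrow> Q \<subseteq> S \<and> is_subtree V par Q"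
  unfolding components_def by blast

lemma comp_max:
  assumes "Q \<in> components V par S" "is_subtree V par W" "W \<subseteq> S" "c \<in> Q" "c \<in> W"
  shows "W \<subseteq> Q"
proof -
  have Q: "Q \<subseteq> S" "is_subtree V par Q" using comp_sub[OF assms(1)] by auto
  have "is_subtree V par (Q \<union> W)" using subtree_union[OF Q(2) assms(2) assms(4,5)] .
  moreover have "Q \<union> W \<subseteq> S" using Q(1) assms(3) by simp
  moreover have "\<forall>Q'. Q \<subseteq> Q' \<and> Q' \<subseteq> S \<and> is_subtree V par Q' \<longrightarrow> Q' = Q"
    using assms(1) unfolding components_def by simp
  ultimately have "Q \<union> W = Q" by simp
  then show ?thesis by blast
qed

lemma comp_unique:
  assumes "Q1 \<in> components V par S" "Q2 \<in> components V par S" "v \<in> Q1" "v \<in> Q2"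
  shows "Q1 = Q2"
proof -
  have a: "Q1 \<subseteq> S" "is_subtree V par Q1" using comp_sub[OF assms(1)] by auto
  have b: "Q2 \<subseteq> S" "is_subtree V par Q2" using comp_sub[OF assms(2)] by auto
  have "Q2 \<subseteq> Q1" using comp_max[OF assms(1) b(2) b(1) assms(3) assms(4)] .
  moreover have "Q1 \<subseteq> Q2" using comp_max[OF assms(2) a(2) a(1) assms(4) assms(3)] .
  ultimately show ?thesis by simp
qed

lemma comp_ex:
  assumes "S \<subseteq> V" "v \<in> S"
  shows "\<exists>Q \<in> components V par S. v \<in> Q"
proof -
  define F where "F = {W. W \<subseteq> S \<and> is_subtree V par W \<and> v \<in> W}"
  have "F \<subseteq> Pow V" unfolding F_def using assms(1) by blast
  then have fin: "finite F" using finV finite_subset[of F "Pow V"] by simp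
  have "{v} \<in> F" unfolding F_def using singleton_subtree assms by auto
  then have ne: "card ` F \<noteq> {}" by blast
  obtain W where W: "W \<in> F" "card W = Max (card ` F)" using Max_in[OF finite_imageI[OF fin] ne] by auto
  have "W \<in> components V par S"
    unfolding components_def
  proof (intro CollectI conjI allI impI)
    show "W \<subseteq> S" "is_subtree V par W" using W unfolding F_def by auto
  next
    fix Q' assume Q': "W \<subseteq> Q' \<and> Q' \<subseteq> S \<and> is_subtree V par Q'"
    then have "Q' \<in> F" using W unfolding F_def by auto
    then have le: "card Q' \<le> card W" using W fin by simp
    have fQ: "finite Q'" using Q' assms(1) finV finite_subset[of Q' V] by auto
    have "card W \<le> card Q'" using card_mono[OF fQ] Q' by simp
    then have "card W = card Q'" using le by simp
    then have "W = Q'" using card_subset_eq[OF fQ, of W] Q' by simp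
    then show "Q' = W" by simp
  qed
  then show ?thesis using W unfolding F_def by blast
qed

definition ancs where "ancs v = {a. anc par a v}"

lemma ancs_less:
  assumes "anc par a v" "a \<noteq> v" "v \<in> V"
  shows "card (ancs a) < card (ancs v)"
proof -
  have "ancs a \<subseteq> ancs v" unfolding ancs_def using assms(1) anc_trans[of par _ a v] by blast
  moreover have "v \<in> ancs v" unfolding ancs_def by simp
  moreover have "v \<notin> ancs a" unfolding ancs_def using assms anc_antisym[of a v] by auto
  moreover have "ancs v \<subseteq> V" unfolding ancs_def using anc_V[of _ v] assms(3) by blast
  then have "finite (ancs v)" using finV finite_subset by blast
  ultimately show ?thesis using psubset_card_mono[of "ancs v" "ancs a"] by blast
qed

lemma top_ex:
  assumes "is_subtree V par R"
  shows "\<exists>m\<in>R. \<forall>y\<in>R. anc par m y"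
proof -
  have RV: "R \<subseteq> V" "R \<noteq> {}" using assms unfolding is_subtree_def by auto
  have cl: "\<forall>x\<in>R. \<forall>y\<in>R. \<forall>z. on_path par x y z \<longrightarrow> z \<in> R"
    using assms(1) unfolding is_subtree_def by blast
  have fin: "finite R" using RV finV finite_subset by blast
  have "(\<lambda>y. card (ancs y)) ` R \<noteq> {}" using RV by simp
  then have "Min ((\<lambda>y. card (ancs y)) ` R) \<in> (\<lambda>y. card (ancs y)) ` R"
    using Min_in[OF finite_imageI[OF fin]] by blast
  then obtain m where m: "m \<in> R" "card (ancs m) = Min ((\<lambda>y. card (ancs y)) ` R)" by auto
  have mmin: "\<forall>y\<in>R. card (ancs m) \<le> card (ancs y)" using m fin by simp
  have mV: "m \<in> V" using m RV by blast
  have "\<forall>y\<in>R. anc par m y"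
  proof
    fix y assume y: "y \<in> R"
    have yV: "y \<in> V" using y RV by blast
    define CA where "CA = {a. anc par a m \<and> anc par a y}"
    have "CA \<subseteq> V" unfolding CA_def using anc_V[of _ m] mV by blast
    then have fCA: "finite CA" using finV finite_subset by blast
    have "r \<in> CA" unfolding CA_def using ancr mV yV by blast
    then have ne: "CA \<noteq> {}" by blast
    have ch: "\<forall>a\<in>CA. \<forall>b\<in>CA. anc par a b \<or> anc par b a" unfolding CA_def using anc_lin[of par _ m] by blast
    obtain z where z: "z \<in> CA" "\<forall>w\<in>CA. anc par w z"
      using chain_max[OF fCA ne ch] by blast
    have "on_path par m y z" unfolding on_path_def using z unfolding CA_def by blast
    then have zR: "z \<in> R" using cl m y by blast
    have zm: "anc par z m" using z unfolding CA_def by simp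
    have "z = m"
    proof (rule ccontr)
      assume "z \<noteq> m"
      then have "card (ancs z) < card (ancs m)" using ancs_less[OF zm _ mV] by simp
      then show False using mmin zR by fastforce
    qed
    then show "anc par m y" using z unfolding CA_def by simp
  qed
  then show ?thesis using m by blast
qed

lemma rt_prop:
  assumes "is_subtree V par R"
  shows "rt par R \<in> R \<and> (\<forall>y\<in>R. anc par (rt par R) y)"
proof -
  obtain m where m: "m \<in> R" "\<forall>y\<in>R. anc par m y" using top_ex[OF assms] by blast
  have RV: "R \<subseteq> V" using assms unfolding is_subtree_def by auto
  have "rt par R = m" unfolding rt_def
  proof (rule the_equality)
    show "m \<in> R \<and> (\<forall>y\<in>R. anc par m y)" using m by simp
  next
    fix x assume x: "x \<in> R \<and> (\<forall>y\<in>R. anc par x y)"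
    then have "anc par x m" "anc par m x" using m by auto
    moreover have "m \<in> V" using m RV by blast
    ultimately show "x = m" using anc_antisym[of x m] by simp
  qed
  then show ?thesis using m by simp
qed

lemma rt_sub:
  assumes "w \<in> R" "R \<subseteq> V"
  shows "rt par (sub par R w) = w"
  unfolding rt_def
proof (rule the_equality)
  show "w \<in> sub par R w \<and> (\<forall>y\<in>sub par R w. anc par w y)" using assms(1) unfolding sub_def by simp
next
  fix x assume x: "x \<in> sub par R w \<and> (\<forall>y\<in>sub par R w. anc par x y)"
  then have "anc par w x" unfolding sub_def by simp
  moreover have "anc par x w" using x assms(1) unfolding sub_def by simp
  moreover have "w \<in> V" using assms by blast
  ultimately show "x = w" using anc_antisym[of x w] by simp
qed

lemma onP_refl: assumes "v \<in> R" "R \<subseteq> V" shows "onP r par c1 R v v"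
proof -
  have vV: "v \<in> V" using assms by blast
  have "\<forall>x. anc par v x \<and> anc par x v \<and> x \<noteq> v \<longrightarrow> leftmost r par c1 x"
    using anc_antisym[of _ v, OF _ _ vV] by blast
  then show ?thesis unfolding onP_def using assms by simp
qed

lemma onP_chain:
  "\<forall>a\<in>{w. onP r par c1 R v w}. \<forall>b\<in>{w. onP r par c1 R v w}. anc par a b \<or> anc par b a"
proof (intro ballI)
  fix a b assume "a \<in> {w. onP r par c1 R v w}" "b \<in> {w. onP r par c1 R v w}"
  then show "anc par a b \<or> anc par b a" using lm_comp[of r par c1 R v a b] by simp
qed

lemma onP_chain_max:
  assumes "R \<subseteq> V" "v \<in> R"
  shows "onP r par c1 R v (lend r par c1 R v) \<and> (\<forall>w'. onP r par c1 R v w' \<longrightarrow> anc par w' (lend r par c1 R v))"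
proof -
  define S where "S = {w. onP r par c1 R v w}"
  have SR: "S \<subseteq> R" unfolding S_def onP_def by blast
  then have "S \<subseteq> V" using assms(1) by simp
  then have fin: "finite S" using finV finite_subset[of S V] by simp
  have ne: "S \<noteq> {}" using onP_refl[OF assms(2,1)] unfolding S_def by blast
  have ch: "\<forall>a\<in>S. \<forall>b\<in>S. anc par a b \<or> anc par b a" unfolding S_def using onP_chain .
  obtain x where x: "x \<in> S" "\<forall>y\<in>S. anc par y x"
    using chain_max[OF fin ne ch] by blast
  have xV: "x \<in> V" using x(1) \<open>S \<subseteq> V\<close> by blast
  have "lend r par c1 R v = x" unfolding lend_def
  proof (rule the_equality)
    show "onP r par c1 R v x \<and> (\<forall>w'. onP r par c1 R v w' \<longrightarrow> anc par w' x)" using x unfolding S_def by simp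
  next
    fix w assume w: "onP r par c1 R v w \<and> (\<forall>w'. onP r par c1 R v w' \<longrightarrow> anc par w' w)"
    then have "anc par x w" using x(1) unfolding S_def by simp
    moreover have "anc par w x" using w x(2) unfolding S_def by simp
    ultimately show "w = x" using anc_antisym[of w x] xV by simp
  qed
  then show ?thesis using x unfolding S_def by simp
qed

lemma bd_onP:
  assumes "R \<subseteq> V" "bd r par c1 R d v = Some b"
  shows "onP r par c1 R v b"
proof -
  define S where "S = {w. onP r par c1 R v w \<and> balanced r par c1 R d w}"
  have SR: "S \<subseteq> R" unfolding S_def onP_def by blast
  then have SV: "S \<subseteq> V" using assms(1) by simp
  then have fin: "finite S" using finV finite_subset[of S V] by simp
  have ex: "\<exists>w. onP r par c1 R v w \<and> balanced r par c1 R d w"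
  proof (rule ccontr)
    assume "\<not> ?thesis" then have "bd r par c1 R d v = None" unfolding bd_def by simp
    then show False using assms(2) by simp
  qed
  then have ne: "S \<noteq> {}" unfolding S_def by blast
  have ch: "\<forall>a\<in>S. \<forall>b\<in>S. anc par a b \<or> anc par b a" using onP_chain unfolding S_def by blast
  obtain x where x: "x \<in> S" "\<forall>y\<in>S. anc par x y"
    using chain_min[OF fin ne ch] by blast
  have xV: "x \<in> V" using x(1) SV by blast
  have "(THE w. onP r par c1 R v w \<and> balanced r par c1 R d w \<and>
                  (\<forall>w'. onP r par c1 R v w' \<and> balanced r par c1 R d w' \<longrightarrow> anc par w w')) = x"
  proof (rule the_equality)
    show "onP r par c1 R v x \<and> balanced r par c1 R d x \<and>
                  (\<forall>w'. onP r par c1 R v w' \<and> balanced r par c1 R d w' \<longrightarrow> anc par x w')" using x unfolding S_def by simp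
  next
    fix w assume w: "onP r par c1 R v w \<and> balanced r par c1 R d w \<and>
                  (\<forall>w'. onP r par c1 R v w' \<and> balanced r par c1 R d w' \<longrightarrow> anc par w w')"
    then have "anc par w x" using x(1) unfolding S_def by simp
    moreover have "anc par x w" using w x(2) unfolding S_def by simp
    ultimately show "w = x" using anc_antisym[of w x] xV by simp
  qed
  then have "b = x" using assms(2) ex unfolding bd_def by simp
  then show ?thesis using x unfolding S_def by simp
qed

lemma CVgood:
  assumes "inCV r par c1 R d x" "R \<subseteq> V"
  shows "x \<in> R \<and> (onP r par c1 R (rt par R) x \<or>
           (\<exists>a. inCV r par c1 R d a \<and> anc par a x \<and> a \<noteq> x \<and> Good par r c1 x a))"
  using assms
proof (induction rule: inCV.induct)
  case (base R d b)
  then have "onP r par c1 R (rt par R) b" using bd_onP by blast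
  then show ?case unfolding onP_def by blast
next
  case (step R d b w x)
  have sR: "sub par R w \<subseteq> V" using step.prems unfolding sub_def by blast
  have IH: "x \<in> sub par R w \<and> (onP r par c1 (sub par R w) (rt par (sub par R w)) x \<or>
           (\<exists>a. inCV r par c1 (sub par R w) d a \<and> anc par a x \<and> a \<noteq> x \<and> Good par r c1 x a))"
    using step.IH sR by blast
  have rtw: "rt par (sub par R w) = w" using rt_sub step by blast
  have xR: "x \<in> R" "anc par w x" using IH unfolding sub_def by auto
  have wV: "w \<in> V" using step by blast
  have pw: "par w = b" "w \<noteq> r" using step.hyps(3) unfolding child_def by auto
  have bCV: "inCV r par c1 R d b" using step.hyps(1) by (rule inCV.base)
  from IH consider "onP r par c1 (sub par R w) w x"
    | "\<exists>a. inCV r par c1 (sub par R w) d a \<and> anc par a x \<and> a \<noteq> x \<and> Good par r c1 x a"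
    using rtw by auto
  then show ?case
  proof cases
    case 1
    have "anc par b x" using xR anc_trans[of par b w x] anc_par[of par w] pw(1) by simp
    moreover have "b \<noteq> x"
    proof
      assume "b = x"
      then have "anc par w (par w)" using xR pw by simp
      then show False using anc_par_eq wV pw by blast
    qed
    moreover have "Good par r c1 x b"
      unfolding Good_def
    proof (intro allI impI)
      fix s assume s: "anc par s x" "anc par b s" "s \<noteq> b" "par s \<noteq> b"
      from anc_lin[of par s x w] s xR consider "anc par s w" | "anc par w s" by blast
      then show "leftmost r par c1 s"
      proof cases
        case 1
        show ?thesis
        proof (cases "s = w")
          case True then show ?thesis using s pw by simp
        next
          case False
          then have "anc par s b" using anc_strict_par[OF 1] pw by simp
          then have "s = b" using anc_antisym[of s b] s wV parV pw by metis
          then show ?thesis using s by simp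
        qed
      next
        case 2
        have "s \<noteq> w" using s pw by auto
        then show ?thesis using 1 2 s unfolding onP_def by blast
      qed
    qed
    ultimately show ?thesis using xR bCV by blast
  next
    case 2
    then obtain a where "inCV r par c1 (sub par R w) d a" "anc par a x" "a \<noteq> x" "Good par r c1 x a" by blast
    moreover have "inCV r par c1 R d a" using inCV.step[OF step.hyps(1,2,3)] calculation(1) by blast
    ultimately show ?thesis using xR by blast
  qed
qed

lemma Good_mono:
  assumes "Good par r c1 y a0" "anc par a0 a" "a \<in> V"
  shows "Good par r c1 y a"
  unfolding Good_def
proof (intro allI impI)
  fix s assume s: "anc par s y" "anc par a s" "s \<noteq> a" "par s \<noteq> a"
  have "anc par a0 s" using assms s anc_trans[of par a0 a s] by blast
  moreover have "s \<noteq> a0"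
  proof
    assume "s = a0" then have "a0 = a" using anc_antisym[of a0 a] assms s by blast
    then show False using s \<open>s = a0\<close> by simp
  qed
  moreover have "par s \<noteq> a0"
  proof
    assume e: "par s = a0"
    have "anc par a (par s)" using anc_strict_par[OF s(2)] s by blast
    then have "a0 = a" using e anc_antisym[of a0 a] assms by blast
    then show False using s e by simp
  qed
  ultimately show "leftmost r par c1 s" using assms(1) s unfolding Good_def by blast
qed

end

locale canon = rtree +
  fixes c1 :: "'a \<Rightarrow> 'a" and k :: nat
begin

abbreviation C where "C R \<equiv> CR r par c1 k R"
abbreviation can where "can R \<equiv> canonical V r par c1 k R"

lemma can_subtree: "can R \<Longrightarrow> is_subtree V par R"
proof (induction rule: canonical.induct)
  case top
  show ?case unfolding is_subtree_def
  proof (intro conjI ballI allI impI)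
    show "V \<noteq> {}" using rV by blast
  next
    fix x y z assume "x \<in> V" "y \<in> V" "on_path par x y z"
    then show "z \<in> V" unfolding on_path_def using anc_V by blast
  qed simp
next
  case (comp R Q)
  then show ?case using comp_sub by blast
qed

lemma can_V: "can R \<Longrightarrow> R \<subseteq> V"
  using can_subtree unfolding is_subtree_def by blast

lemma rt_in_C: "can R \<Longrightarrow> rt par R \<in> C R"
  unfolding CR_def using rt_prop[OF can_subtree] by auto

lemma C_sub: assumes "can R" shows "C R \<subseteq> R"
proof -
  have RV: "R \<subseteq> V" using can_V assms by blast
  have rt: "rt par R \<in> R" using rt_prop[OF can_subtree[OF assms]] by blast
  have "CV r par c1 R d \<subseteq> R" for d unfolding CV_def using CVgood RV by blast
  moreover have "lend r par c1 R (rt par R) \<in> R" using onP_chain_max[OF RV rt] unfolding onP_def by blast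
  ultimately show ?thesis unfolding CR_def using rt by auto
qed

lemma onP_Good: "onP r par c1 R v y \<Longrightarrow> Good par r c1 y v"
  unfolding onP_def Good_def by blast

lemma C_large: "\<not> real k \<ge> real (card R) / 2 - 1 \<Longrightarrow>
  C R = CV r par c1 R (real (card R) / real k) \<union> {lend r par c1 R (rt par R), rt par R}"
  unfolding CR_def by simp

lemma C_small: "real k \<ge> real (card R) / 2 - 1 \<Longrightarrow> C R = R"
  unfolding CR_def by simp

lemma Struct:
  assumes "can P" "\<not> real k \<ge> real (card P) / 2 - 1" "y \<in> C P" "y \<noteq> rt par P"
  shows "\<exists>a0 \<in> C P. anc par a0 y \<and> a0 \<noteq> y \<and> Good par r c1 y a0"
proof -
  define d where "d = real (card P) / real k"
  have CP: "C P = CV r par c1 P d \<union> {lend r par c1 P (rt par P), rt par P}"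
    using C_large[OF assms(2)] unfolding d_def by simp
  have PV: "P \<subseteq> V" using can_V assms(1) by blast
  have rtP: "rt par P \<in> P" using rt_prop[OF can_subtree[OF assms(1)]] by blast
  have rtC: "rt par P \<in> C P" using CP by simp
  have "y \<in> CV r par c1 P d \<or> y = lend r par c1 P (rt par P)" using assms(3,4) CP by blast
  then have "onP r par c1 P (rt par P) y \<or> (\<exists>a. inCV r par c1 P d a \<and> anc par a y \<and> a \<noteq> y \<and> Good par r c1 y a)"
  proof
    assume "y \<in> CV r par c1 P d"
    then show ?thesis using CVgood[OF _ PV] unfolding CV_def by blast
  next
    assume "y = lend r par c1 P (rt par P)"
    then show ?thesis using onP_chain_max[OF PV rtP] by simp
  qed
  then show ?thesis
  proof
    assume o: "onP r par c1 P (rt par P) y"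
    then have "anc par (rt par P) y" unfolding onP_def by simp
    then show ?thesis using rtC onP_Good[OF o] assms(4) by metis
  next
    assume "\<exists>a. inCV r par c1 P d a \<and> anc par a y \<and> a \<noteq> y \<and> Good par r c1 y a"
    then obtain a where a: "inCV r par c1 P d a" "anc par a y" "a \<noteq> y" "Good par r c1 y a" by blast
    have "a \<in> C P" using a(1) CP unfolding CV_def by simp
    then show ?thesis using a by blast
  qed
qed

lemma G2:
  assumes "can R"
  shows "z \<in> R \<Longrightarrow> z' \<in> V \<Longrightarrow> z' \<notin> R \<Longrightarrow> par z' = z \<Longrightarrow> z' \<noteq> r \<Longrightarrow> z \<in> C R"
  using assms
proof (induction arbitrary: z z' rule: canonical.induct)
  case top then show ?case by simp
next
  case (comp P Q)
  have Qs: "Q \<subseteq> P - C P" "is_subtree V par Q" using comp_sub[OF comp.hyps(2)] by auto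
  have PV: "P \<subseteq> V" using can_V comp.hyps(1) by blast
  have CPP: "C P \<subseteq> P" using C_sub comp.hyps(1) by blast
  have stP: "is_subtree V par P" using can_subtree comp.hyps(1) by blast
  have zP: "z \<in> P" "z \<notin> C P" using comp.prems(1) Qs by auto
  have zz': "anc par z z'" using anc_par[of par z'] comp.prems(4) by metis
  have z'P: "z' \<in> P"
  proof (rule ccontr)
    assume "z' \<notin> P"
    then have "z \<in> C P" using comp.IH[OF zP(1) comp.prems(2) _ comp.prems(4,5)] by simp
    then show False using zP by simp
  qed
  have segz: "seg (par z') z' \<subseteq> {z, z'}" using seg_adj comp.prems(2,4) by blast
  have z'C: "z' \<in> C P"
  proof (rule ccontr)
    assume "z' \<notin> C P"
    then have "seg (par z') z' \<subseteq> P - C P" using segz zP z'P by blast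
    moreover have "is_subtree V par (seg (par z') z')" using seg_subtree[OF anc_par comp.prems(2)] .
    moreover have "z \<in> seg (par z') z'" unfolding seg_def using comp.prems(4) zz' by simp
    ultimately have "seg (par z') z' \<subseteq> Q" using comp_max[OF comp.hyps(2)] comp.prems(1) by blast
    moreover have "z' \<in> seg (par z') z'" unfolding seg_def by simp
    ultimately show False using comp.prems(3) by blast
  qed
  have large: "\<not> real k \<ge> real (card P) / 2 - 1"
  proof
    assume "real k \<ge> real (card P) / 2 - 1"
    then have "C P = P" by (rule C_small)
    then show False using zP by simp
  qed
  have rtP: "rt par P \<in> P" "\<forall>y\<in>P. anc par (rt par P) y" using rt_prop[OF stP] by auto
  have zV: "z \<in> V" using zP PV by blast
  have z'rt: "z' \<noteq> rt par P"
  proof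
    assume "z' = rt par P"
    then have "anc par z' (par z')" using rtP zP comp.prems(4) by simp
    then show False using anc_par_eq comp.prems(2,5) by blast
  qed
  obtain a0 where a0: "a0 \<in> C P" "anc par a0 z'" "a0 \<noteq> z'" "Good par r c1 z' a0"
    using Struct[OF comp.hyps(1) large z'C z'rt] by blast
  define A where "A = {a \<in> C P. anc par a z' \<and> a \<noteq> z'}"
  have AV: "A \<subseteq> V" unfolding A_def using CPP PV by blast
  then have finA: "finite A" using finV finite_subset[of A V] by simp
  have neA: "A \<noteq> {}" using a0 unfolding A_def by blast
  have chA: "\<forall>a\<in>A. \<forall>b\<in>A. anc par a b \<or> anc par b a" unfolding A_def using anc_lin[of par _ z'] by blast
  obtain a where a: "a \<in> A" "\<forall>b\<in>A. anc par b a" using chain_max[OF finA neA chA] by blast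
  have aC: "a \<in> C P" "anc par a z'" "a \<noteq> z'" using a(1) unfolding A_def by auto
  have aV: "a \<in> V" using a(1) AV by blast
  have a0a: "anc par a0 a" using a(2) a0 unfolding A_def by blast
  have Ga: "Good par r c1 z' a" using Good_mono[OF a0(4) a0a aV] .
  have az: "anc par a z" using anc_strict_par[OF aC(2,3)] comp.prems(4) by simp
  have anz: "a \<noteq> z" using aC(1) zP(2) by blast
  obtain q where q: "child r par q a" "anc par q z" "\<forall>w. child r par w a \<and> anc par w z \<longrightarrow> w = q"
    using child_toward[OF az anz zV] by blast
  have pq: "par q = a" "q \<noteq> r" using q(1) unfolding child_def by auto
  have qV: "q \<in> V" using anc_V[OF q(2) zV] .
  have qna: "q \<noteq> a"
  proof
    assume "q = a" then have "anc par q (par q)" using pq by simp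
    then show False using anc_par_eq qV pq by blast
  qed
  have aq: "anc par a q" using pq anc_par[of par q] by simp
  have aP: "a \<in> P" using aC CPP by blast
  have segQ: "seg q z \<subseteq> P - C P"
  proof
    fix s assume s: "s \<in> seg q z"
    then have qs: "anc par q s" "anc par s z" unfolding seg_def by auto
    have as: "anc par a s" using anc_trans[OF aq qs(1)] .
    have sP: "s \<in> P" using between[OF stP aP zP(1) as qs(2)] .
    have "s \<notin> C P"
    proof
      assume sC: "s \<in> C P"
      have sz': "anc par s z'" using anc_trans[OF qs(2) zz'] .
      have "s \<noteq> z'"
      proof
        assume "s = z'" then have "anc par z' (par z')" using qs(2) comp.prems(4) by simp
        then show False using anc_par_eq comp.prems(2,5) by blast
      qed
      then have "s \<in> A" unfolding A_def using sC sz' by simp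
      then have "anc par s a" using a(2) by blast
      then have "s = a" using anc_antisym[of s a] as aV by simp
      then have "anc par q a" using qs by simp
      then show False using anc_antisym[of q a] aq aV qna by simp
    qed
    then show "s \<in> P - C P" using sP by simp
  qed
  have "seg q z \<subseteq> Q"
    using comp_max[OF comp.hyps(2) seg_subtree[OF q(2) zV] segQ comp.prems(1)] q(2) unfolding seg_def by simp
  then have qQ: "q \<in> Q" unfolding seg_def using q(2) anc_refl[of par q] by blast
  have aQ: "a \<notin> Q" using aC Qs by blast
  have rtQ: "rt par Q = q"
  proof (rule ccontr)
    assume ne: "rt par Q \<noteq> q"
    have rq: "rt par Q \<in> Q" "anc par (rt par Q) q" using rt_prop[OF Qs(2)] qQ by auto
    have "anc par (rt par Q) a" using anc_strict_par[OF rq(2) ne] pq by simp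
    then have "a \<in> Q" using between[OF Qs(2) rq(1) comp.prems(1) _ az] by simp
    then show False using aQ by simp
  qed
  have lm: "leftmost r par c1 s" if s: "anc par q s" "anc par s z" "s \<noteq> q" for s
  proof -
    have sV: "s \<in> V" using anc_V[OF s(2) zV] .
    have "anc par s z'" using anc_trans[OF s(2) zz'] .
    moreover have as: "anc par a s" using anc_trans[OF aq s(1)] .
    moreover have "s \<noteq> a"
    proof
      assume "s = a" then have "anc par q a" using s by simp
      then show False using anc_antisym[of q a] aq aV qna by simp
    qed
    moreover have "par s \<noteq> a"
    proof
      assume ps: "par s = a"
      have "s \<noteq> r"
      proof
        assume "s = r" then have "anc par q r" using s by simp
        moreover have "anc par r q" using ancr qV by simp
        ultimately show False using anc_antisym[of q r] rV pq by simp
      qed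
      then have "child r par s a" unfolding child_def using ps by simp
      then have "s = q" using q(3) s(2) by blast
      then show False using s(3) by simp
    qed
    ultimately show ?thesis using Ga unfolding Good_def by blast
  qed
  have onPz: "onP r par c1 Q q z" unfolding onP_def using comp.prems(1) q(2) lm by blast
  have lz': "leftmost r par c1 z'" using Ga aC(2,3) anz comp.prems(4) unfolding Good_def by simp
  then have c1z: "c1 z = z'" unfolding leftmost_def using comp.prems(4) by simp
  have maxz: "anc par w' z" if w': "onP r par c1 Q q w'" for w'
  proof -
    have "anc par w' z \<or> anc par z w'" using lm_comp[OF w' onPz] .
    then show ?thesis
    proof
      assume zw: "anc par z w'"
      show ?thesis
      proof (cases "w' = z")
        case True then show ?thesis by simp
      next
        case False
        have w'Q: "w' \<in> Q" using w' unfolding onP_def by simp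
        have w'V: "w' \<in> V" using w'Q Qs PV by blast
        obtain t where t: "child r par t z" "anc par t w'" using child_toward[OF zw _ w'V] False by metis
        have pt: "par t = z" "t \<noteq> r" using t(1) unfolding child_def by auto
        have tV: "t \<in> V" using anc_V[OF t(2) w'V] .
        have qt: "anc par q t" using anc_trans[OF q(2)] anc_par[of par t] pt by simp
        have "t \<noteq> q"
        proof
          assume "t = q" then have "anc par q (par q)" using q(2) pt by simp
          then show False using anc_par_eq qV pq by blast
        qed
        then have "leftmost r par c1 t" using w' qt t(2) unfolding onP_def by blast
        then have "t = z'" using c1z pt unfolding leftmost_def by simp
        then have "z' \<in> Q" using between[OF Qs(2) comp.prems(1) w'Q zz'] t(2) by simp
        then show ?thesis using comp.prems(3) by simp
      qed
    qed simp
  qed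
  have "lend r par c1 Q q = z" unfolding lend_def
  proof (rule the_equality)
    show "onP r par c1 Q q z \<and> (\<forall>w'. onP r par c1 Q q w' \<longrightarrow> anc par w' z)" using onPz maxz by blast
  next
    fix w assume w: "onP r par c1 Q q w \<and> (\<forall>w'. onP r par c1 Q q w' \<longrightarrow> anc par w' w)"
    then have "anc par z w" using onPz by blast
    moreover have "anc par w z" using maxz w by blast
    ultimately show "w = z" using anc_antisym[of w z] zV by simp
  qed
  then show ?case unfolding CR_def using rtQ comp.prems(1) by simp
qed

end

locale cs = canon +
  fixes seq :: "'a set \<Rightarrow> nat list"
  assumes vs: "valid_seq V r par c1 k seq"
begin

abbreviation T where "T v \<equiv> Tv V r par c1 k v"

lemma seqV: "seq V = []" using vs unfolding valid_seq_def by simp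

lemma seq_f: "can R \<Longrightarrow> \<exists>f. inj_on f (components V par (R - C R)) \<and>
   (\<forall>Q\<in>components V par (R - C R). seq Q = seq R @ [f Q])"
  using vs bij_betw_imp_inj_on unfolding valid_seq_def by metis

lemma seq_comp: "can R \<Longrightarrow> Q \<in> components V par (R - C R) \<Longrightarrow> \<exists>x. seq Q = seq R @ [x]"
  using seq_f by blast

lemma seq_inj: "can R1 \<Longrightarrow> can R2 \<Longrightarrow> seq R1 = seq R2 \<Longrightarrow> R1 = R2"
proof (induction arbitrary: R2 rule: canonical.induct)
  case top
  from top.prems(1) show ?case
  proof cases
    case top then show ?thesis by simp
  next
    case (comp P)
    then obtain x where "seq R2 = seq P @ [x]" using seq_comp by blast
    then show ?thesis using top.prems(2) seqV by simp
  qed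
next
  case (comp P1 Q1)
  obtain x1 where x1: "seq Q1 = seq P1 @ [x1]" using seq_comp comp.hyps by blast
  from comp.prems(1) show ?case
  proof cases
    case top then show ?thesis using comp.prems(2) seqV x1 by simp
  next
    case (comp P2)
    obtain x2 where x2: "seq R2 = seq P2 @ [x2]" using seq_comp comp by blast
    have "seq P1 = seq P2" using x1 x2 \<open>seq Q1 = seq R2\<close> by simp
    then have P: "P1 = P2" using \<open>\<And>R2. can R2 \<Longrightarrow> seq P1 = seq R2 \<Longrightarrow> P1 = R2\<close> comp by blast
    obtain f where f: "inj_on f (components V par (P1 - C P1))"
      "\<forall>Q\<in>components V par (P1 - C P1). seq Q = seq P1 @ [f Q]" using seq_f \<open>can P1\<close> by blast
    have "seq Q1 = seq P1 @ [f Q1]" "seq R2 = seq P1 @ [f R2]" using f(2) \<open>Q1 \<in> _\<close> comp P by auto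
    then have "f Q1 = f R2" using \<open>seq Q1 = seq R2\<close> by simp
    then show ?thesis using f(1) \<open>Q1 \<in> _\<close> comp P unfolding inj_on_def by blast
  qed
qed

fun D :: "'a \<Rightarrow> nat \<Rightarrow> 'a set" where
  "D v 0 = V"
| "D v (Suc i) = (THE Q. Q \<in> components V par (D v i - C (D v i)) \<and> v \<in> Q)"

lemma D_step:
  assumes "can (D v i)" "v \<in> D v i" "v \<notin> C (D v i)"
  shows "D v (Suc i) \<in> components V par (D v i - C (D v i)) \<and> v \<in> D v (Suc i)"
proof -
  have "D v i - C (D v i) \<subseteq> V" using can_V assms(1) by blast
  then obtain Q where Q: "Q \<in> components V par (D v i - C (D v i))" "v \<in> Q"
    using comp_ex assms(2,3) by blast
  have "D v (Suc i) = Q" unfolding D.simps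
    by (rule the_equality) (use Q comp_unique in blast)+
  then show ?thesis using Q by simp
qed

lemma D0: "v \<in> V \<Longrightarrow> (\<forall>j<m. v \<notin> C (D v j)) \<Longrightarrow>
  can (D v m) \<and> v \<in> D v m \<and> length (seq (D v m)) = m \<and> (\<forall>j\<le>m. prefix (seq (D v j)) (seq (D v m)))"
proof (induction m)
  case 0 then show ?case using canonical.top seqV by simp
next
  case (Suc m)
  then have IH: "can (D v m)" "v \<in> D v m" "length (seq (D v m)) = m" "\<forall>j\<le>m. prefix (seq (D v j)) (seq (D v m))"
    by auto
  have nv: "v \<notin> C (D v m)" using Suc.prems by simp
  have st: "D v (Suc m) \<in> components V par (D v m - C (D v m))" "v \<in> D v (Suc m)"
    using D_step[OF IH(1,2) nv] by auto
  have can: "can (D v (Suc m))" using canonical.comp[OF IH(1) st(1)] .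
  obtain x where x: "seq (D v (Suc m)) = seq (D v m) @ [x]" using seq_comp[OF IH(1) st(1)] by blast
  have "\<forall>j\<le>Suc m. prefix (seq (D v j)) (seq (D v (Suc m)))"
  proof (intro allI impI)
    fix j assume "j \<le> Suc m"
    then consider "j = Suc m" | "j \<le> m" by linarith
    then show "prefix (seq (D v j)) (seq (D v (Suc m)))"
    proof cases
      case 2 then show ?thesis using IH(4) x by simp
    qed simp
  qed
  then show ?case using can st x IH(3) by simp
qed

lemma D1: "can R \<Longrightarrow> v \<in> R \<Longrightarrow> R = D v (length (seq R)) \<and> (\<forall>j < length (seq R). v \<notin> C (D v j))"
proof (induction rule: canonical.induct)
  case top then show ?case using seqV by simp
next
  case (comp P Q)
  have vP: "v \<in> P" "v \<notin> C P" using comp.prems comp_sub[OF comp.hyps(2)] by auto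
  then have IH: "P = D v (length (seq P))" "\<forall>j < length (seq P). v \<notin> C (D v j)" using comp.IH by auto
  obtain x where x: "seq Q = seq P @ [x]" using seq_comp[OF comp.hyps] by blast
  have "D v (Suc (length (seq P))) \<in> components V par (P - C P) \<and> v \<in> D v (Suc (length (seq P)))"
    using D_step[of v "length (seq P)"] IH(1) comp.hyps(1) vP by simp
  then have "D v (Suc (length (seq P))) = Q" using comp_unique comp.hyps(2) comp.prems by blast
  moreover have "\<forall>j < Suc (length (seq P)). v \<notin> C (D v j)"
    using IH vP less_Suc_eq by auto
  ultimately show ?case using x by simp
qed

lemma C_uniq: "can R1 \<Longrightarrow> v \<in> C R1 \<Longrightarrow> can R2 \<Longrightarrow> v \<in> C R2 \<Longrightarrow> R1 = R2"
proof -
  assume a: "can R1" "v \<in> C R1" "can R2" "v \<in> C R2"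
  have "v \<in> R1" "v \<in> R2" using a C_sub by auto
  then have d1: "R1 = D v (length (seq R1))" "\<forall>j < length (seq R1). v \<notin> C (D v j)"
    and d2: "R2 = D v (length (seq R2))" "\<forall>j < length (seq R2). v \<notin> C (D v j)" using D1 a by auto
  have "\<not> length (seq R1) < length (seq R2)" using d2(2) d1(1) a(2) by metis
  moreover have "\<not> length (seq R2) < length (seq R1)" using d1(2) d2(1) a(4) by metis
  ultimately have "length (seq R1) = length (seq R2)" by simp
  then show "R1 = R2" using d1(1) d2(1) by simp
qed

lemma rt_C_D: "can R \<Longrightarrow> rt par R \<in> R \<inter> C R"
  using rt_in_C rt_prop[OF can_subtree] by blast

lemma C_ex: assumes "v \<in> V" shows "\<exists>m. v \<in> C (D v m)"
proof (rule ccontr)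
  assume "\<not> ?thesis"
  then have nC: "\<forall>m. v \<notin> C (D v m)" by simp
  have bound: "card (D v m) + m \<le> card V" for m
  proof (induction m)
    case 0 then show ?case by simp
  next
    case (Suc m)
    have pre: "\<forall>j<m. v \<notin> C (D v j)" using nC by blast
    have h: "can (D v m)" "v \<in> D v m" using D0[OF assms pre] by blast+
    have st: "D v (Suc m) \<in> components V par (D v m - C (D v m))" using D_step h nC by blast
    have sub: "D v (Suc m) \<subseteq> D v m - C (D v m)" using comp_sub[OF st] by blast
    have "rt par (D v m) \<in> D v m \<inter> C (D v m)" using rt_C_D h by blast
    then have ps: "D v (Suc m) \<subset> D v m" using sub by blast
    have "finite (D v m)" using can_V[OF h(1)] finV finite_subset by blast
    then have "card (D v (Suc m)) < card (D v m)" using psubset_card_mono ps by blast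
    then show ?case using Suc.IH by simp
  qed
  have pre: "\<forall>j<Suc (card V). v \<notin> C (D v j)" using nC by blast
  have h: "can (D v (Suc (card V)))" "v \<in> D v (Suc (card V))" using D0[OF assms pre] by blast+
  have "finite (D v (Suc (card V)))" using can_V[OF h(1)] finV finite_subset by blast
  then have "card (D v (Suc (card V))) \<ge> 1" using h(2) card_0_eq[of "D v (Suc (card V))"] by fastforce
  then show False using bound[of "Suc (card V)"] by simp
qed

lemma T_prop: assumes "v \<in> V" shows "can (T v) \<and> v \<in> C (T v)"
proof -
  define m where "m = (LEAST m. v \<in> C (D v m))"
  have vm: "v \<in> C (D v m)" using C_ex[OF assms] LeastI_ex unfolding m_def by metis
  have "\<forall>j<m. v \<notin> C (D v j)" using not_less_Least unfolding m_def by blast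
  then have cm: "can (D v m)" using D0[OF assms] by blast
  have "T v = D v m" unfolding Tv_def
    by (rule the_equality) (use cm vm C_uniq in blast)+
  then show ?thesis using cm vm by simp
qed

lemma T_uniq: "v \<in> V \<Longrightarrow> can R \<Longrightarrow> v \<in> C R \<Longrightarrow> T v = R"
  using T_prop C_uniq by blast

lemma prefix_T: assumes "v \<in> V" "can R" "v \<in> R" shows "prefix (seq R) (seq (T v))"
proof -
  have tv: "can (T v)" "v \<in> C (T v)" using T_prop[OF assms(1)] by auto
  then have "v \<in> T v" using C_sub by blast
  then have dT: "T v = D v (length (seq (T v)))" "\<forall>j < length (seq (T v)). v \<notin> C (D v j)" using D1 tv by auto
  have dR: "R = D v (length (seq R))" "\<forall>j < length (seq R). v \<notin> C (D v j)" using D1 assms(2,3) by auto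
  have le: "length (seq R) \<le> length (seq (T v))"
  proof (rule ccontr)
    assume "\<not> ?thesis"
    then have "v \<notin> C (D v (length (seq (T v))))" using dR(2) by simp
    then show False using dT(1) tv(2) by simp
  qed
  have "\<forall>j\<le>length (seq (T v)). prefix (seq (D v j)) (seq (D v (length (seq (T v)))))"
    using D0[OF assms(1) dT(2)] by blast
  then show ?thesis using le dR(1) dT(1) by metis
qed

lemma strict_in: assumes "u \<in> V" "v \<in> V" "strict_prefix (seq (T u)) (seq (T v))" shows "v \<in> T u"
proof -
  have tv: "can (T v)" "v \<in> C (T v)" using T_prop[OF assms(2)] by auto
  have tu: "can (T u)" using T_prop[OF assms(1)] by auto
  then have "v \<in> T v" using C_sub tv by blast
  then have dT: "T v = D v (length (seq (T v)))" "\<forall>j < length (seq (T v)). v \<notin> C (D v j)" using D1 tv by auto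
  define mu where "mu = length (seq (T u))"
  have lt: "mu < length (seq (T v))" using assms(3) prefix_length_less unfolding mu_def by blast
  have d0: "can (D v mu)" "v \<in> D v mu" "length (seq (D v mu)) = mu"
    using D0[OF assms(2), of mu] dT(2) lt by auto
  have "prefix (seq (D v mu)) (seq (T v))" using D0[OF assms(2) dT(2)] lt dT(1) by (metis less_imp_le)
  moreover have "prefix (seq (T u)) (seq (T v))" using assms(3) strict_prefix_def by blast
  ultimately have "seq (D v mu) = seq (T u)" using d0(3) unfolding mu_def
    by (metis prefix_length_prefix prefix_order.antisym order_refl)
  then have "D v mu = T u" using seq_inj d0(1) tu by blast
  then show ?thesis using d0(2) by simp
qed

lemma parent_C:
  assumes "can U" "w \<in> U" "y \<in> V" "y \<notin> U" "(par y = w \<and> y \<noteq> r) \<or> (y = par w \<and> w \<noteq> r)"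
  shows "\<exists>P. can P \<and> U \<in> components V par (P - C P) \<and> y \<in> C P"
proof -
  have "U \<noteq> V" using assms(3,4) by blast
  with assms(1) obtain P where P: "can P" "U \<in> components V par (P - C P)"
    by (cases rule: canonical.cases) auto
  have Us: "U \<subseteq> P - C P" "is_subtree V par U" using comp_sub[OF P(2)] by auto
  have stP: "is_subtree V par P" using can_subtree P(1) by blast
  have PV: "P \<subseteq> V" using can_V P(1) by blast
  have wP: "w \<in> P" "w \<notin> C P" using Us assms(2) by auto
  have wV: "w \<in> V" using wP PV by blast
  have yP: "y \<in> P"
  proof (rule ccontr)
    assume yP: "y \<notin> P"
    from assms(5) show False
    proof
      assume "par y = w \<and> y \<noteq> r"
      then have "w \<in> C P" using G2[OF P(1) wP(1) assms(3) yP] by blast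
      then show False using wP by simp
    next
      assume a: "y = par w \<and> w \<noteq> r"
      have rt: "rt par P \<in> P" "anc par (rt par P) w" using rt_prop[OF stP] wP by auto
      show False
      proof (cases "rt par P = w")
        case True then show False using rt_in_C[OF P(1)] wP by simp
      next
        case False
        then have "anc par (rt par P) y" using anc_strict_par[OF rt(2)] a by simp
        then have "y \<in> P" using between[OF stP rt(1) wP(1) _ ] a anc_par[of par w] by simp
        then show False using yP by simp
      qed
    qed
  qed
  obtain b where b: "b \<in> V" "{b, par b} = {w, y}" using assms(5) assms(3) wV by blast
  have segb: "seg (par b) b \<subseteq> {w, y}" using seg_adj[OF b(1)] b(2) by blast
  show ?thesis
  proof (rule ccontr)
    assume "\<not> ?thesis"
    then have "y \<notin> C P" using P by blast
    then have "seg (par b) b \<subseteq> P - C P" using segb wP yP by blast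
    moreover have "is_subtree V par (seg (par b) b)" using seg_subtree[OF anc_par b(1)] .
    moreover have "w \<in> seg (par b) b" "y \<in> seg (par b) b" unfolding seg_def using b(2) anc_par[of par b] anc_refl
      by (metis doubleton_eq_iff mem_Collect_eq)+
    ultimately have "y \<in> U" using comp_max[OF P(2)] assms(2) by blast
    then show False using assms(4) by simp
  qed
qed

lemma route_cases:
  assumes "u \<in> V" "v \<in> V" "u \<noteq> v" "anc par u v \<or> anc par v u"
  shows "v \<in> C (T u) \<or>
    (\<exists>Q. Q \<in> components V par (T u - C (T u)) \<and> v \<in> Q \<and> T (route V r par c1 k u v) = Q) \<or>
    (\<exists>P. can P \<and> T u \<in> components V par (P - C P) \<and> T (route V r par c1 k u v) = P \<and> v \<notin> T u)"
proof -
  define U where "U = T u"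
  define CU where "CU = C U"
  have tu: "can U" "u \<in> CU" using T_prop[OF assms(1)] unfolding U_def CU_def by auto
  have CUU: "CU \<subseteq> U" using C_sub tu unfolding CU_def by blast
  have UV: "U \<subseteq> V" using can_V tu by blast
  have stU: "is_subtree V par U" using can_subtree tu by blast
  have uU: "u \<in> U" using tu CUU by blast
  have CUV: "CU \<subseteq> V" using CUU UV by blast
  have finCU: "finite CU" using CUV finV finite_subset[of CU V] by simp
  show ?thesis
  proof (cases "v \<in> CU")
    case True then have "v \<in> C (T u)" unfolding CU_def U_def .
    then show ?thesis by (rule disjI1)
  next
    case vC: False
    show ?thesis
    proof (cases "anc par u v")
      case uv: True
      define X where "X = {y \<in> CU. anc par y v}"
      have finX: "finite X" using finCU unfolding X_def by simp
      have neX: "X \<noteq> {}" using tu uv unfolding X_def by blast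
      have chX: "\<forall>a\<in>X. \<forall>b\<in>X. anc par a b \<or> anc par b a" unfolding X_def using anc_lin[of par _ v] by blast
      obtain x0 where x0: "x0 \<in> X" "\<forall>y\<in>X. anc par y x0" using chain_max[OF finX neX chX] by blast
      define x where "x = (THE x. x \<in> CU \<and> anc par x v \<and> (\<forall>y. y \<in> CU \<and> anc par y v \<longrightarrow> anc par y x))"
      have "x = x0" unfolding x_def
      proof (rule the_equality)
        show "x0 \<in> CU \<and> anc par x0 v \<and> (\<forall>y. y \<in> CU \<and> anc par y v \<longrightarrow> anc par y x0)" using x0 unfolding X_def by blast
      next
        fix x' assume x': "x' \<in> CU \<and> anc par x' v \<and> (\<forall>y. y \<in> CU \<and> anc par y v \<longrightarrow> anc par y x')"
        then have "anc par x' x0" "anc par x0 x'" using x0 unfolding X_def by auto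
        moreover have "x0 \<in> V" using x0 CUV unfolding X_def by blast
        ultimately show "x' = x0" using anc_antisym[of x' x0] by simp
      qed
      then have xp: "x \<in> CU" "anc par x v" "\<forall>y. y \<in> CU \<and> anc par y v \<longrightarrow> anc par y x" using x0 unfolding X_def by auto
      have xV: "x \<in> V" using xp CUV by blast
      have xU: "x \<in> U" using xp CUU by blast
      have xv: "x \<noteq> v" using xp vC by blast
      define w where "w = (THE w. child r par w x \<and> anc par w v)"
      have rte: "route V r par c1 k u v = w"
        unfolding route_def Let_def using uv xv unfolding x_def w_def U_def CU_def by simp
      have wp: "child r par w x \<and> anc par w v" using theI'[OF child_toward[OF xp(2) xv assms(2)]] unfolding w_def .
      have pw: "par w = x" "w \<noteq> r" using wp unfolding child_def by auto
      have wV: "w \<in> V" using anc_V wp assms(2) by blast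
      have xw: "anc par x w" using anc_par[of par w] pw by simp
      have wnx: "w \<noteq> x"
      proof
        assume "w = x" then have "anc par w (par w)" using pw by simp
        then show False using anc_par_eq wV pw by blast
      qed
      show ?thesis
      proof (cases "v \<in> U")
        case vU: True
        have segs: "seg w v \<subseteq> U - CU"
        proof
          fix s assume "s \<in> seg w v"
          then have s: "anc par w s" "anc par s v" unfolding seg_def by auto
          have xs: "anc par x s" using anc_trans[OF xw s(1)] .
          have sU: "s \<in> U" using between[OF stU xU vU xs s(2)] .
          have "s \<notin> CU"
          proof
            assume "s \<in> CU"
            then have "anc par s x" using xp(3) s(2) by blast
            then have "s = x" using anc_antisym[of s x] xs xV by simp
            then have "anc par w x" using s by simp
            then show False using anc_antisym[of w x] xw xV wnx by simp
          qed
          then show "s \<in> U - CU" using sU by simp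
        qed
        obtain Q where Q: "Q \<in> components V par (U - CU)" "v \<in> Q" using comp_ex[of "U - CU" v] UV vU vC by blast
        have Qs: "Q \<subseteq> U - CU" "is_subtree V par Q" using comp_sub[OF Q(1)] by auto
        have canQ: "can Q" using canonical.comp[OF tu(1)] Q(1) unfolding CU_def by simp
        have "seg w v \<subseteq> Q" using comp_max[OF Q(1) seg_subtree[OF _ assms(2)] segs Q(2)] wp unfolding seg_def by simp
        then have wQ: "w \<in> Q" unfolding seg_def using wp anc_refl[of par w] by blast
        have "rt par Q = w"
        proof (rule ccontr)
          assume ne: "rt par Q \<noteq> w"
          have rq: "rt par Q \<in> Q" "anc par (rt par Q) w" using rt_prop[OF Qs(2)] wQ by auto
          have "anc par (rt par Q) x" using anc_strict_par[OF rq(2) ne] pw by simp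
          then have "x \<in> Q" using between[OF Qs(2) rq(1) wQ _ xw] by simp
          then show False using Qs xp by blast
        qed
        then have "w \<in> C Q" using rt_in_C[OF canQ] by simp
        then have "T w = Q" using T_uniq[OF wV canQ] by simp
        then have e: "T (route V r par c1 k u v) = Q" using rte by simp
        have "Q \<in> components V par (T u - C (T u))" using Q(1) unfolding U_def CU_def .
        then have "\<exists>Q. Q \<in> components V par (T u - C (T u)) \<and> v \<in> Q \<and> T (route V r par c1 k u v) = Q"
          using Q(2) e by blast
        then show ?thesis by (intro disjI2 disjI1)
      next
        case vU: False
        define Z where "Z = {s \<in> U. anc par s v}"
        have "Z \<subseteq> V" using UV unfolding Z_def by blast
        then have finZ: "finite Z" using finV finite_subset[of Z V] by simp
        have neZ: "Z \<noteq> {}" using uU uv unfolding Z_def by blast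
        have chZ: "\<forall>a\<in>Z. \<forall>b\<in>Z. anc par a b \<or> anc par b a" unfolding Z_def using anc_lin[of par _ v] by blast
        obtain z where z: "z \<in> Z" "\<forall>y\<in>Z. anc par y z" using chain_max[OF finZ neZ chZ] by blast
        have zU: "z \<in> U" "anc par z v" using z unfolding Z_def by auto
        have zV: "z \<in> V" using zU UV by blast
        have zv: "z \<noteq> v" using zU vU by blast
        obtain z' where z': "child r par z' z" "anc par z' v" "\<forall>w. child r par w z \<and> anc par w v \<longrightarrow> w = z'"
          using child_toward[OF zU(2) zv assms(2)] by blast
        have pz: "par z' = z" "z' \<noteq> r" using z' unfolding child_def by auto
        have z'V: "z' \<in> V" using anc_V z' assms(2) by blast
        have z'U: "z' \<notin> U"
        proof
          assume "z' \<in> U"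
          then have "anc par z' z" using z z'(2) unfolding Z_def by blast
          then have "anc par z' (par z')" using pz by simp
          then show False using anc_par_eq z'V pz by blast
        qed
        have zC: "z \<in> CU" using G2[OF tu(1) zU(1) z'V z'U pz] unfolding CU_def by simp
        have "x \<in> Z" using xU xp unfolding Z_def by simp
        then have "anc par x z" using z by blast
        moreover have "anc par z x" using xp(3) zC zU by blast
        ultimately have xz: "x = z" using anc_antisym[of x z] zV by simp
        have "w = z'" using wp z'(3) xz by blast
        then have rte': "route V r par c1 k u v = z'" using rte by simp
        obtain P where P: "can P" "U \<in> components V par (P - C P)" "z' \<in> C P"
          using parent_C[OF tu(1) zU(1) z'V z'U] pz by blast
        have "T z' = P" using T_uniq[OF z'V P(1) P(3)] .
        then have e: "T (route V r par c1 k u v) = P" using rte' by simp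
        have "T u \<in> components V par (P - C P)" "v \<notin> T u" using P(2) vU unfolding U_def by auto
        then have "\<exists>P. can P \<and> T u \<in> components V par (P - C P) \<and> T (route V r par c1 k u v) = P \<and> v \<notin> T u"
          using P(1) e by blast
        then show ?thesis by (intro disjI2)
      qed
    next
      case nuv: False
      then have vu: "anc par v u" using assms(4) by simp
      define X where "X = {y \<in> CU. anc par v y \<and> anc par y u}"
      have finX: "finite X" using finCU unfolding X_def by simp
      have "u \<in> X" using tu vu unfolding X_def by simp
      then have neX: "X \<noteq> {}" by blast
      have chX: "\<forall>a\<in>X. \<forall>b\<in>X. anc par a b \<or> anc par b a"
      proof (intro ballI)
        fix a b assume "a \<in> X" "b \<in> X"
        then have "anc par a u" "anc par b u" unfolding X_def by auto
        then show "anc par a b \<or> anc par b a" using anc_lin[of par a u b] by simp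
      qed
      obtain x0 where x0: "x0 \<in> X" "\<forall>y\<in>X. anc par x0 y" using chain_min[OF finX neX chX] by blast
      define x where "x = (THE x. x \<in> CU \<and> anc par v x \<and> anc par x u \<and> (\<forall>y. y \<in> CU \<and> anc par v y \<and> anc par y u \<longrightarrow> anc par x y))"
      have "x = x0" unfolding x_def
      proof (rule the_equality)
        show "x0 \<in> CU \<and> anc par v x0 \<and> anc par x0 u \<and> (\<forall>y. y \<in> CU \<and> anc par v y \<and> anc par y u \<longrightarrow> anc par x0 y)" using x0 unfolding X_def by blast
      next
        fix x' assume x': "x' \<in> CU \<and> anc par v x' \<and> anc par x' u \<and> (\<forall>y. y \<in> CU \<and> anc par v y \<and> anc par y u \<longrightarrow> anc par x' y)"
        have x0X: "x0 \<in> CU" "anc par v x0" "anc par x0 u" using x0(1) unfolding X_def by auto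
        have "x' \<in> X" using x' unfolding X_def by simp
        then have "anc par x0 x'" using x0(2) by simp
        moreover have "anc par x' x0" using x' x0X by simp
        moreover have "x0 \<in> V" using x0X CUV by blast
        ultimately show "x' = x0" using anc_antisym[of x' x0] by simp
      qed
      then have xp: "x \<in> CU" "anc par v x" "anc par x u" "\<forall>y. y \<in> CU \<and> anc par v y \<and> anc par y u \<longrightarrow> anc par x y"
        using x0 unfolding X_def by auto
      have xV: "x \<in> V" using xp CUV by blast
      have xU: "x \<in> U" using xp CUU by blast
      have xv: "x \<noteq> v" using xp vC by blast
      have rte: "route V r par c1 k u v = par x"
        unfolding route_def Let_def using nuv xv unfolding x_def U_def CU_def by simp
      have xr: "x \<noteq> r"
      proof
        assume "x = r" then have "anc par v r" using xp by simp
        moreover have "anc par r v" using ancr assms(2) by simp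
        ultimately have "v = r" using anc_antisym[of v r] rV by simp
        then show False using xv \<open>x = r\<close> by simp
      qed
      have xpx: "anc par (par x) x" by simp
      have vpx: "anc par v (par x)" using anc_strict_par[OF xp(2)] xv by simp
      have pxV: "par x \<in> V" using parV xV by simp
      have xnpx: "\<not> anc par x (par x)" using anc_par_eq xV xr by blast
      show ?thesis
      proof (cases "v \<in> U")
        case vU: True
        have pxU: "par x \<in> U" using between[OF stU vU xU vpx xpx] .
        have segs: "seg v (par x) \<subseteq> U - CU"
        proof
          fix s assume "s \<in> seg v (par x)"
          then have s: "anc par v s" "anc par s (par x)" unfolding seg_def by auto
          have sx: "anc par s x" using anc_trans[OF s(2) xpx] .
          have sU: "s \<in> U" using between[OF stU vU xU s(1) sx] .
          have "s \<notin> CU"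
          proof
            assume "s \<in> CU"
            moreover have "anc par s u" using anc_trans[OF sx xp(3)] .
            ultimately have "anc par x s" using xp(4) s(1) by blast
            then have "anc par x (par x)" using anc_trans[OF _ s(2)] by simp
            then show False using xnpx by simp
          qed
          then show "s \<in> U - CU" using sU by simp
        qed
        obtain Q where Q: "Q \<in> components V par (U - CU)" "v \<in> Q" using comp_ex[of "U - CU" v] UV vU vC by blast
        have Qs: "Q \<subseteq> U - CU" "is_subtree V par Q" using comp_sub[OF Q(1)] by auto
        have canQ: "can Q" using canonical.comp[OF tu(1)] Q(1) unfolding CU_def by simp
        have "seg v (par x) \<subseteq> Q" using comp_max[OF Q(1) seg_subtree[OF vpx pxV] segs] Q(2) vpx unfolding seg_def by simp
        then have pxQ: "par x \<in> Q" unfolding seg_def using vpx anc_refl[of par "par x"] by blast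
        have xQ: "x \<notin> Q" using Qs xp by blast
        have "par x \<in> C Q" using G2[OF canQ pxQ xV xQ _ xr] by simp
        then have "T (par x) = Q" using T_uniq[OF pxV canQ] by simp
        then have e: "T (route V r par c1 k u v) = Q" using rte by simp
        have "Q \<in> components V par (T u - C (T u))" using Q(1) unfolding U_def CU_def .
        then have "\<exists>Q. Q \<in> components V par (T u - C (T u)) \<and> v \<in> Q \<and> T (route V r par c1 k u v) = Q"
          using Q(2) e by blast
        then show ?thesis by (intro disjI2 disjI1)
      next
        case vU: False
        have rt: "rt par U \<in> U" "\<forall>y\<in>U. anc par (rt par U) y" using rt_prop[OF stU] by auto
        have ru: "anc par (rt par U) u" using rt uU by blast
        have "anc par (rt par U) v \<or> anc par v (rt par U)" using anc_lin[OF ru vu] .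
        moreover have "\<not> anc par (rt par U) v"
        proof
          assume "anc par (rt par U) v"
          then have "v \<in> U" using between[OF stU rt(1) uU _ vu] by simp
          then show False using vU by simp
        qed
        ultimately have vr: "anc par v (rt par U)" by simp
        have rC: "rt par U \<in> CU" using rt_in_C[OF tu(1)] unfolding CU_def .
        have rV: "rt par U \<in> V" using rt UV by blast
        have "rt par U \<in> X" unfolding X_def using rC vr ru by simp
        then have "anc par x (rt par U)" using x0 \<open>x = x0\<close> by blast
        moreover have "anc par (rt par U) x" using rt xU by blast
        ultimately have xrt: "x = rt par U" using anc_antisym[of x "rt par U"] rV by simp
        have pxU: "par x \<notin> U"
        proof
          assume "par x \<in> U" then have "anc par x (par x)" using rt xrt by simp
          then show False using xnpx by simp
        qed
        obtain P where P: "can P" "U \<in> components V par (P - C P)" "par x \<in> C P"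
          using parent_C[OF tu(1) xU pxV pxU] xr by blast
        have "T (par x) = P" using T_uniq[OF pxV P(1) P(3)] .
        then have e: "T (route V r par c1 k u v) = P" using rte by simp
        have "T u \<in> components V par (P - C P)" "v \<notin> T u" using P(2) vU unfolding U_def by auto
        then have "\<exists>P. can P \<and> T u \<in> components V par (P - C P) \<and> T (route V r par c1 k u v) = P \<and> v \<notin> T u"
          using P(1) e by blast
        then show ?thesis by (intro disjI2)
      qed
    qed
  qed
qed

end

definition GoalL :: "nat list \<Rightarrow> nat list \<Rightarrow> nat list \<Rightarrow> bool" where
  "GoalL a b c \<longleftrightarrow> (strict_prefix a b \<longrightarrow>
            length c > length a \<and> (c = b \<or> strict_prefix c b))
       \<and> (strict_prefix b a \<longrightarrow>
            length c < length a \<and> (c = b \<or> strict_prefix b c))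
       \<and> (let S = longest_common_prefix a b in
           length S < min (length a) (length b) \<longrightarrow>
            length c < length a \<and> (c = S \<or> strict_prefix S c))"

lemma lcp_self: "prefix a b \<Longrightarrow> longest_common_prefix a b = a"
  using longest_common_prefix_max_prefix[of a a b] longest_common_prefix_prefix1[of a b]
  by (simp add: prefix_order.antisym)

lemma fin_same: "GoalL a a c"
  unfolding GoalL_def Let_def using lcp_self[of a a] by simp

lemma fin_A: assumes "c = a @ [x]" "prefix c b" shows "GoalL a b c"
proof -
  have ab: "prefix a b" using assms prefix_order.order_trans[of a c b] by simp
  have "\<not> strict_prefix b a" using ab prefix_order.antisym strict_prefix_def by (metis prefix_order.less_le_not_le)
  moreover have "c = b \<or> strict_prefix c b" using assms(2) strict_prefix_def by blast
  ultimately show ?thesis unfolding GoalL_def Let_def using lcp_self[OF ab] assms(1) prefix_length_le[OF ab] by simp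
qed

lemma fin_B: assumes "a = c @ [x]" "\<not> strict_prefix a b" shows "GoalL a b c"
proof -
  have p2: "c = b \<or> strict_prefix b c" if "strict_prefix b a"
  proof -
    have "prefix b a" "b \<noteq> a" using that strict_prefix_def by auto
    then have "prefix b c" using assms(1) by simp
    then show ?thesis using strict_prefix_def by blast
  qed
  have p3: "c = S \<or> strict_prefix S c" if "S = longest_common_prefix a b" "length S < length a" for S
  proof -
    have "prefix S a" using longest_common_prefix_prefix1 that(1) by simp
    moreover have "S \<noteq> a" using that(2) by auto
    ultimately have "prefix S c" using assms(1) by simp
    then show ?thesis using strict_prefix_def by blast
  qed
  show ?thesis unfolding GoalL_def Let_def using assms p2 p3 by simp
qed

context cs begin

lemma main:
  assumes "u \<in> V" "v \<in> V" "u \<noteq> v" "anc par u v \<or> anc par v u"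
  shows "GoalL (seq (T u)) (seq (T v)) (seq (T (route V r par c1 k u v)))"
proof -
  from route_cases[OF assms] consider "v \<in> C (T u)"
    | "\<exists>Q. Q \<in> components V par (T u - C (T u)) \<and> v \<in> Q \<and> T (route V r par c1 k u v) = Q"
    | "\<exists>P. can P \<and> T u \<in> components V par (P - C P) \<and> T (route V r par c1 k u v) = P \<and> v \<notin> T u"
    by blast
  then show ?thesis
  proof cases
    case 1
    have "T v = T u" using T_uniq[OF assms(2)] T_prop[OF assms(1)] 1 by blast
    then show ?thesis using fin_same by simp
  next
    case 2
    then obtain Q where Q: "Q \<in> components V par (T u - C (T u))" "v \<in> Q" "T (route V r par c1 k u v) = Q" by blast
    have tu: "can (T u)" using T_prop[OF assms(1)] by blast
    have canQ: "can Q" using canonical.comp[OF tu Q(1)] .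
    obtain x where x: "seq Q = seq (T u) @ [x]" using seq_comp[OF tu Q(1)] by blast
    have "prefix (seq Q) (seq (T v))" using prefix_T[OF assms(2) canQ Q(2)] .
    then show ?thesis using fin_A[OF x] Q(3) by simp
  next
    case 3
    then obtain P where P: "can P" "T u \<in> components V par (P - C P)" "T (route V r par c1 k u v) = P" "v \<notin> T u" by blast
    obtain x where x: "seq (T u) = seq P @ [x]" using seq_comp[OF P(1,2)] by blast
    have "\<not> strict_prefix (seq (T u)) (seq (T v))" using strict_in[OF assms(1,2)] P(4) by blast
    then show ?thesis using fin_B[OF x] P(3) by simp
  qed
qed

end

theorem lemma13:
  fixes V :: "'a set" and r :: 'a and par c1 :: "'a \<Rightarrow> 'a" and k :: nat
    and seq :: "'a set \<Rightarrow> nat list" and u v u' :: 'a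
  assumes "is_rooted_tree V r par" and "valid_c1 V r par c1" and "k \<ge> 4"
    and "valid_seq V r par c1 k seq"
    and "u \<in> V" and "v \<in> V" and "u \<noteq> v" and "anc par u v \<or> anc par v u"
    and "u' = route V r par c1 k u v"
  shows "(strict_prefix (Sv V r par c1 k seq u) (Sv V r par c1 k seq v) \<longrightarrow>
            length (Sv V r par c1 k seq u') > length (Sv V r par c1 k seq u) \<and>
            (Sv V r par c1 k seq u' = Sv V r par c1 k seq v \<or>
             strict_prefix (Sv V r par c1 k seq u') (Sv V r par c1 k seq v)))
       \<and> (strict_prefix (Sv V r par c1 k seq v) (Sv V r par c1 k seq u) \<longrightarrow>
            length (Sv V r par c1 k seq u') < length (Sv V r par c1 k seq u) \<and>
            (Sv V r par c1 k seq u' = Sv V r par c1 k seq v \<or>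
             strict_prefix (Sv V r par c1 k seq v) (Sv V r par c1 k seq u')))
       \<and> (let S = longest_common_prefix (Sv V r par c1 k seq u) (Sv V r par c1 k seq v) in
           length S < min (length (Sv V r par c1 k seq u)) (length (Sv V r par c1 k seq v)) \<longrightarrow>
            length (Sv V r par c1 k seq u') < length (Sv V r par c1 k seq u) \<and>
            (Sv V r par c1 k seq u' = S \<or> strict_prefix S (Sv V r par c1 k seq u')))"
proof -
  interpret cs V r par c1 k seq
    using assms(1,4) by (unfold_locales) auto
  have "GoalL (seq (T u)) (seq (T v)) (seq (T u'))" using main[OF assms(5-8)] assms(9) by simp
  then show ?thesis unfolding GoalL_def Sv_def .
qed

end
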